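(* Let $\mathcal L(k;s,t)=k+\sum_{n\ge0}u_{n+1}(s,t)k^{-n}$ and $\mathcal P(k;s,t)=p_0(s,t)k^N+\cdots+p_{N-1}(s,t)k+p_N(s,t)$ (a constant term $p_N$ allowed, $p_0\ne0$) satisfy the $N$-dcmKP equations. If $\varphi(s,t)$ satisfies $$\frac{\partial\varphi(s,t)}{\partial t_n}=-\mathcal B_n\Bigl(-\frac{\partial\varphi(s,t)}{\partial x};s,t\Bigr),\qquad n\ge1,$$ (where $\mathcal B_n(k;s,t)$ is evaluated at $k=-\partial\varphi/\partial x$), then $$\tilde{\mathcal L}(k;s,t):=\mathcal L\Bigl(k-\frac{\partial\varphi}{\partial x};s,t\Bigr)=e^{\mathrm{ad}\varphi}\mathcal L,\qquad \tilde{\mathcal P}(k;s,t):=e^{\partial\varphi/\partial s}\,\mathcal P\Bigl(k-\frac{\partial\varphi}{\partial x};s,t\Bigr)$$ also satisfy the $N$-dcmKP equations.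
   Context: Fix a positive integer $N$. Variables $s$ (continuous), $x$, $t=(t_1,t_2,\dots)$, where $x$ and $t_1$ appear only through $x+t_1$. Poisson bracket $\{f,g\}=\frac{\partial f}{\partial k}\frac{\partial g}{\partial x}-\frac{\partial f}{\partial x}\frac{\partial g}{\partial k}$; $(\mathrm{ad}f)g=\{f,g\}$. For a polynomial $\mathcal P=p_0k^N+\cdots+p_N$ with $p_0\ne0$, $\log\mathcal P:=\log p_0+N\log k+\log(1+\sum_{n=1}^N(p_n/p_0)k^{-n})$ expanded in $k^{-1}$. The $N$-dcmKP equations are, for $n\ge1$, $\partial_{t_n}\mathcal L=\{\mathcal B_n,\mathcal L\}$ with $\mathcal B_n:=(\mathcal L^n)_{>0}$ (projection onto positive powers of $k$), $\partial_s\mathcal L=\{\log\mathcal P,\mathcal L\}$, $\partial_{t_n}\log\mathcal P=\partial_s\mathcal B_n-\{\log\mathcal P,\mathcal B_n\}$. *)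

theory Defs
  imports "HOL-Analysis.Analysis"
begin

text \<open>Coefficient functions depend on s (real) and on t :: nat => real, where
  t 0 is the variable x and t n (n >= 1) is the time t_n.\<close>

type_synonym fn = "real \<Rightarrow> (nat \<Rightarrow> real) \<Rightarrow> real"

text \<open>Formal series in k: coefficient of k^j (j :: int).  All series used are bounded above.\<close>
type_synonym ser = "int \<Rightarrow> fn"

datatype var = S | T nat

definition pd :: "var \<Rightarrow> fn \<Rightarrow> fn" where
  "pd v F = (case v of
      S \<Rightarrow> (\<lambda>s t. deriv (\<lambda>h. F h t) s)
    | T n \<Rightarrow> (\<lambda>s t. deriv (\<lambda>h. F s (t(n := h))) (t n)))"

definition partial_differentiable :: "var \<Rightarrow> fn \<Rightarrow> bool" where
  "partial_differentiable v F = (\<forall>s t. case v of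
      S \<Rightarrow> (\<lambda>h. F h t) differentiable (at s)
    | T n \<Rightarrow> (\<lambda>h. F s (t(n := h))) differentiable (at (t n)))"

definition smooth :: "fn \<Rightarrow> bool" where
  "smooth F = (\<forall>vs v w. partial_differentiable v (fold pd vs F) \<and>
      pd v (pd w (fold pd vs F)) = pd w (pd v (fold pd vs F)))"

text \<open>x and t_1 appear only through x + t_1.\<close>
definition xt_conv :: "fn \<Rightarrow> bool" where
  "xt_conv F = (\<forall>s t a. F s (t(0 := t 0 + a, 1 := t 1 - a)) = F s t)"

definition sone :: ser where "sone = (\<lambda>j s t. if j = 0 then 1 else 0)"
definition sadd :: "ser \<Rightarrow> ser \<Rightarrow> ser" where "sadd f g = (\<lambda>j s t. f j s t + g j s t)"
definition ssub :: "ser \<Rightarrow> ser \<Rightarrow> ser" where "ssub f g = (\<lambda>j s t. f j s t - g j s t)"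
definition smul :: "ser \<Rightarrow> ser \<Rightarrow> ser" where
  "smul f g = (\<lambda>j s t. \<Sum>i\<in>{i. f i s t \<noteq> 0 \<and> g (j - i) s t \<noteq> 0}. f i s t * g (j - i) s t)"
definition spow :: "ser \<Rightarrow> nat \<Rightarrow> ser" where "spow f n = (smul f ^^ n) sone"

definition sd :: "var \<Rightarrow> ser \<Rightarrow> ser" where "sd v f = (\<lambda>j. pd v (f j))"
definition dk :: "ser \<Rightarrow> ser" where "dk f = (\<lambda>j s t. of_int (j + 1) * f (j + 1) s t)"

definition pos :: "ser \<Rightarrow> ser" where "pos f = (\<lambda>j. if 0 < j then f j else (\<lambda>s t. 0))"
definition Bn :: "ser \<Rightarrow> nat \<Rightarrow> ser" where "Bn L n = pos (spow L n)"

definition pbr :: "ser \<Rightarrow> ser \<Rightarrow> ser" where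
  "pbr f g = ssub (smul (dk f) (sd (T 0) g)) (smul (sd (T 0) f) (dk g))"

text \<open>P = p_0 k^N + ... + p_N as a series\<close>
definition polyser :: "nat \<Rightarrow> (nat \<Rightarrow> fn) \<Rightarrow> ser" where
  "polyser N p = (\<lambda>j s t. if 0 \<le> j \<and> j \<le> int N then p (N - nat j) s t else 0)"

definition Qser :: "nat \<Rightarrow> (nat \<Rightarrow> fn) \<Rightarrow> ser" where
  "Qser N p = (\<lambda>j s t. if - int N \<le> j \<and> j < 0 then p (nat (- j)) s t / p 0 s t else 0)"

text \<open>log(1+Q) expanded in k^{-1}: the coefficient of k^j only receives Q^m with m <= -j.\<close>
definition logser :: "nat \<Rightarrow> (nat \<Rightarrow> fn) \<Rightarrow> ser" where
  "logser N p = (\<lambda>j s t. \<Sum>m = 1..nat (- j).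
      ((-1) ^ (m + 1) / real m) * spow (Qser N p) m j s t)"

text \<open>log P = log p_0 + N log k + log(1+Q); its k-derivative and its derivative in a
  variable v (the real-valued log p_0 is taken as ln |p_0|; only its derivatives occur).\<close>
definition dlogP_k :: "nat \<Rightarrow> (nat \<Rightarrow> fn) \<Rightarrow> ser" where
  "dlogP_k N p = (\<lambda>j s t. (if j = -1 then real N else 0) + dk (logser N p) j s t)"

definition dlogP_v :: "var \<Rightarrow> nat \<Rightarrow> (nat \<Rightarrow> fn) \<Rightarrow> ser" where
  "dlogP_v v N p = (\<lambda>j s t. (if j = 0 then pd v (\<lambda>s t. ln \<bar>p 0 s t\<bar>) s t else 0)
      + sd v (logser N p) j s t)"

definition brlog :: "nat \<Rightarrow> (nat \<Rightarrow> fn) \<Rightarrow> ser \<Rightarrow> ser" where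
  "brlog N p g = ssub (smul (dlogP_k N p) (sd (T 0) g)) (smul (dlogP_v (T 0) N p) (dk g))"

definition dcmKP :: "nat \<Rightarrow> ser \<Rightarrow> (nat \<Rightarrow> fn) \<Rightarrow> bool" where
  "dcmKP N L p =
     ((\<forall>n\<ge>1. sd (T n) L = pbr (Bn L n) L) \<and>
      sd S L = brlog N p L \<and>
      (\<forall>n\<ge>1. dlogP_v (T n) N p = ssub (sd S (Bn L n)) (brlog N p (Bn L n))))"

definition evalpos :: "ser \<Rightarrow> fn \<Rightarrow> fn" where
  "evalpos f a = (\<lambda>s t. \<Sum>j\<in>{j. 0 < j \<and> f j s t \<noteq> 0}. f j s t * a s t ^ nat j)"

text \<open>f(k - a), expanded in k^{-1} (f bounded above)\<close>
definition sshift :: "fn \<Rightarrow> ser \<Rightarrow> ser" where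
  "sshift a f = (\<lambda>j s t. \<Sum>m\<in>{m. j \<le> m \<and> f m s t \<noteq> 0}.
      f m s t * ((of_int m :: real) gchoose nat (m - j)) * (- a s t) ^ nat (m - j))"

definition cst :: "fn \<Rightarrow> ser" where "cst F = (\<lambda>j. if j = 0 then F else (\<lambda>s t. 0))"
definition ad :: "fn \<Rightarrow> ser \<Rightarrow> ser" where "ad F g = pbr (cst F) g"
definition expad :: "fn \<Rightarrow> ser \<Rightarrow> ser" where
  "expad F f = (\<lambda>j s t. \<Sum>m. ((ad F ^^ m) f) j s t / fact m)"

end

theory Submission
  imports Defs "HOL-Computational_Algebra.Formal_Laurent_Series"
begin


section \<open>Partial derivative calculus\<close>

definition lf :: "var \<Rightarrow> fn \<Rightarrow> real \<Rightarrow> (nat \<Rightarrow> real) \<Rightarrow> real \<Rightarrow> real" where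
  "lf v F s t = (case v of S \<Rightarrow> (\<lambda>h. F h t) | T n \<Rightarrow> (\<lambda>h. F s (t(n := h))))"

definition x0 :: "var \<Rightarrow> real \<Rightarrow> (nat \<Rightarrow> real) \<Rightarrow> real" where
  "x0 v s t = (case v of S \<Rightarrow> s | T n \<Rightarrow> t n)"

abbreviation pdf :: "var \<Rightarrow> fn \<Rightarrow> bool" where "pdf \<equiv> partial_differentiable"

lemma pd_lf: "pd v F s t = deriv (lf v F s t) (x0 v s t)"
  by (cases v) (simp_all add: pd_def lf_def x0_def)

lemma pdf_lf: "pdf v F = (\<forall>s t. lf v F s t differentiable (at (x0 v s t)))"
  by (cases v) (simp_all add: partial_differentiable_def lf_def x0_def)

lemma rdiff_fd: "(f::real\<Rightarrow>real) differentiable (at x) \<Longrightarrow> f field_differentiable (at x)"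
  by (simp add: differentiable_def field_differentiable_def has_real_derivative_iff)

lemma pdfD: "pdf v F \<Longrightarrow> lf v F s t field_differentiable (at (x0 v s t))"
  using pdf_lf rdiff_fd by blast


definition ls :: "var \<Rightarrow> real \<Rightarrow> (nat \<Rightarrow> real) \<Rightarrow> real \<Rightarrow> real" where
  "ls v s t h = (case v of S \<Rightarrow> h | T n \<Rightarrow> s)"
definition lt :: "var \<Rightarrow> real \<Rightarrow> (nat \<Rightarrow> real) \<Rightarrow> real \<Rightarrow> (nat \<Rightarrow> real)" where
  "lt v s t h = (case v of S \<Rightarrow> t | T n \<Rightarrow> t(n := h))"

lemma lf_eq: "lf v F s t = (\<lambda>h. F (ls v s t h) (lt v s t h))"
  by (cases v) (simp_all add: lf_def ls_def lt_def)

lemma pdfD': "pdf v F \<Longrightarrow> (\<lambda>h. F (ls v s t h) (lt v s t h)) field_differentiable (at (x0 v s t))"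
  using pdfD[of v F s t] by (simp add: lf_eq)

lemma lslt_at[simp]: "ls v s t (x0 v s t) = s" "lt v s t (x0 v s t) = t"
  by (cases v; simp add: ls_def lt_def x0_def)+

lemma pd_const[simp]: "pd v (\<lambda>s t. c) = (\<lambda>s t. 0)"
  by (intro ext) (simp add: pd_lf lf_eq)

lemma pdf_const[simp]: "pdf v (\<lambda>s t. c)"
  by (simp add: pdf_lf lf_eq)

lemma pdf_add[intro]: "pdf v F \<Longrightarrow> pdf v G \<Longrightarrow> pdf v (\<lambda>s t. F s t + G s t)"
  by (simp add: pdf_lf lf_eq)
lemma pdf_diff[intro]: "pdf v F \<Longrightarrow> pdf v G \<Longrightarrow> pdf v (\<lambda>s t. F s t - G s t)"
  by (simp add: pdf_lf lf_eq)
lemma pdf_mult[intro]: "pdf v F \<Longrightarrow> pdf v G \<Longrightarrow> pdf v (\<lambda>s t. F s t * G s t)"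
  by (simp add: pdf_lf lf_eq)
lemma pdf_minus[intro]: "pdf v F \<Longrightarrow> pdf v (\<lambda>s t. - F s t)"
  by (simp add: pdf_lf lf_eq)
lemma pdf_power[intro]: "pdf v F \<Longrightarrow> pdf v (\<lambda>s t. F s t ^ n)"
  by (simp add: pdf_lf lf_eq)
lemma pdf_cmult[intro]: "pdf v F \<Longrightarrow> pdf v (\<lambda>s t. c * F s t)"
  by (simp add: pdf_lf lf_eq)
lemma pdf_sum[intro]: "finite A \<Longrightarrow> (\<And>i. i \<in> A \<Longrightarrow> pdf v (F i)) \<Longrightarrow> pdf v (\<lambda>s t. \<Sum>i\<in>A. F i s t)"
  unfolding pdf_lf lf_eq by (auto intro!: differentiable_sum)
lemma pdf_divide[intro]: "pdf v F \<Longrightarrow> pdf v G \<Longrightarrow> (\<And>s t. G s t \<noteq> 0) \<Longrightarrow> pdf v (\<lambda>s t. F s t / G s t)"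
  unfolding pdf_lf lf_eq by (auto intro!: differentiable_divide)
lemma pdf_exp[intro]: "pdf v F \<Longrightarrow> pdf v (\<lambda>s t. exp (F s t))"
  unfolding pdf_lf lf_eq
  by (metis DERIV_chain2 DERIV_exp differentiable_def has_real_derivative_iff)

lemma pd_add: "pdf v F \<Longrightarrow> pdf v G \<Longrightarrow> pd v (\<lambda>s t. F s t + G s t) = (\<lambda>s t. pd v F s t + pd v G s t)"
  by (intro ext) (simp add: pd_lf lf_eq pdfD')
lemma pd_diff: "pdf v F \<Longrightarrow> pdf v G \<Longrightarrow> pd v (\<lambda>s t. F s t - G s t) = (\<lambda>s t. pd v F s t - pd v G s t)"
  by (intro ext) (simp add: pd_lf lf_eq pdfD')
lemma pd_mult: "pdf v F \<Longrightarrow> pdf v G \<Longrightarrow> pd v (\<lambda>s t. F s t * G s t) = (\<lambda>s t. pd v F s t * G s t + F s t * pd v G s t)"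
  by (intro ext) (simp add: pd_lf lf_eq pdfD' lf_eq)
lemma pd_minus: "pdf v F \<Longrightarrow> pd v (\<lambda>s t. - F s t) = (\<lambda>s t. - pd v F s t)"
  by (intro ext) (simp add: pd_lf lf_eq pdfD')
lemma pd_cmult: "pdf v F \<Longrightarrow> pd v (\<lambda>s t. c * F s t) = (\<lambda>s t. c * pd v F s t)"
  by (intro ext) (simp add: pd_lf lf_eq pdfD' deriv_cmult)
lemma pd_power: "pdf v F \<Longrightarrow> pd v (\<lambda>s t. F s t ^ n) = (\<lambda>s t. of_nat n * F s t ^ (n - 1) * pd v F s t)"
  by (intro ext) (simp add: pd_lf lf_eq pdfD' deriv_pow lf_eq)
lemma pd_sum: "finite A \<Longrightarrow> (\<And>i. i \<in> A \<Longrightarrow> pdf v (F i)) \<Longrightarrow>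
   pd v (\<lambda>s t. \<Sum>i\<in>A. F i s t) = (\<lambda>s t. \<Sum>i\<in>A. pd v (F i) s t)"
proof (intro ext)
  fix s t assume A: "finite A" "\<And>i. i \<in> A \<Longrightarrow> pdf v (F i)"
  have "((\<lambda>h. \<Sum>i\<in>A. F i (ls v s t h) (lt v s t h)) has_field_derivative
          (\<Sum>i\<in>A. deriv (\<lambda>h. F i (ls v s t h) (lt v s t h)) (x0 v s t))) (at (x0 v s t))"
    by (rule DERIV_sum) (use A pdfD' in \<open>auto simp: DERIV_deriv_iff_field_differentiable\<close>)
  then show "pd v (\<lambda>s t. \<Sum>i\<in>A. F i s t) s t = (\<Sum>i\<in>A. pd v (F i) s t)"
    by (simp add: pd_lf lf_eq DERIV_imp_deriv)
qed

lemma pd_divide: "pdf v F \<Longrightarrow> pdf v G \<Longrightarrow> (\<And>s t. G s t \<noteq> 0) \<Longrightarrow>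
  pd v (\<lambda>s t. F s t / G s t) = (\<lambda>s t. (pd v F s t * G s t - F s t * pd v G s t) / G s t ^ 2)"
  by (intro ext) (simp add: pd_lf lf_eq pdfD')

lemma pd_exp: "pdf v F \<Longrightarrow> pd v (\<lambda>s t. exp (F s t)) = (\<lambda>s t. exp (F s t) * pd v F s t)"
proof (intro ext)
  fix s t assume A: "pdf v F"
  have d: "((\<lambda>h. F (ls v s t h) (lt v s t h)) has_field_derivative
       deriv (\<lambda>h. F (ls v s t h) (lt v s t h)) (x0 v s t)) (at (x0 v s t))"
    using pdfD'[OF A, of s t] by (simp add: DERIV_deriv_iff_field_differentiable)
  have "((\<lambda>h. exp (F (ls v s t h) (lt v s t h))) has_field_derivative
       exp (F s t) * deriv (\<lambda>h. F (ls v s t h) (lt v s t h)) (x0 v s t)) (at (x0 v s t))"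
    using DERIV_chain2[OF DERIV_exp d] by simp
  then show "pd v (\<lambda>s t. exp (F s t)) s t = exp (F s t) * pd v F s t"
    by (simp add: pd_lf lf_eq DERIV_imp_deriv)
qed

lemma ln_abs_eq: "(\<lambda>y::real. ln \<bar>y\<bar>) = (\<lambda>y. ln (y^2) / 2)"
proof
  fix y :: real
  show "ln \<bar>y\<bar> = ln (y^2) / 2"
  proof (cases "y = 0")
    case False
    have "ln (y^2) = ln (\<bar>y\<bar>^2)" by simp
    also have "\<dots> = 2 * ln \<bar>y\<bar>" using False by (subst ln_realpow) auto
    finally show ?thesis by simp
  qed simp
qed

lemma sq_pos: "(x::real) \<noteq> 0 \<Longrightarrow> 0 < x * x"
  by (cases "x > 0") (auto simp: mult_neg_neg)

lemma DERIV_ln_abs: "x \<noteq> 0 \<Longrightarrow> DERIV (\<lambda>y::real. ln \<bar>y\<bar>) x :> inverse x"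
  unfolding ln_abs_eq
  by (auto intro!: derivative_eq_intros simp: power2_eq_square field_simps sq_pos)

lemma ln_abs_chain: "pdf v F \<Longrightarrow> (\<And>s t. F s t \<noteq> 0) \<Longrightarrow>
  ((\<lambda>h. ln \<bar>F (ls v s t h) (lt v s t h)\<bar>) has_field_derivative
       inverse (F s t) * deriv (\<lambda>h. F (ls v s t h) (lt v s t h)) (x0 v s t)) (at (x0 v s t))"
proof -
  assume A: "pdf v F" "\<And>s t. F s t \<noteq> 0"
  have d: "((\<lambda>h. F (ls v s t h) (lt v s t h)) has_field_derivative
       deriv (\<lambda>h. F (ls v s t h) (lt v s t h)) (x0 v s t)) (at (x0 v s t))"
    using pdfD'[OF A(1), of s t] by (simp add: DERIV_deriv_iff_field_differentiable)
  have l: "DERIV (\<lambda>y::real. ln \<bar>y\<bar>) (F (ls v s t (x0 v s t)) (lt v s t (x0 v s t))) :> inverse (F s t)"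
    using DERIV_ln_abs A(2)[of s t] by simp
  show ?thesis
    using DERIV_chain2[OF l d] by simp
qed

lemma pd_ln_abs: "pdf v F \<Longrightarrow> (\<And>s t. F s t \<noteq> 0) \<Longrightarrow>
   pd v (\<lambda>s t. ln \<bar>F s t\<bar>) = (\<lambda>s t. pd v F s t / F s t)"
proof (intro ext)
  fix s t assume A: "pdf v F" "\<And>s t. F s t \<noteq> 0"
  show "pd v (\<lambda>s t. ln \<bar>F s t\<bar>) s t = pd v F s t / F s t"
    using ln_abs_chain[OF A, of s t] by (simp add: pd_lf lf_eq DERIV_imp_deriv field_simps)
qed

lemma pdf_ln_abs[intro]: "pdf v F \<Longrightarrow> (\<And>s t. F s t \<noteq> 0) \<Longrightarrow> pdf v (\<lambda>s t. ln \<bar>F s t\<bar>)"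
  unfolding pdf_lf[of v "\<lambda>s t. ln \<bar>F s t\<bar>"] lf_eq
  using ln_abs_chain real_differentiable_def by blast




unbundle fps_syntax
notation fls_nth (infixl \<open>$$\<close> 75)

definition ub :: "int \<Rightarrow> ser \<Rightarrow> bool" where "ub M f = (\<forall>j>M. \<forall>s t. f j s t = 0)"
definition ubd :: "ser \<Rightarrow> bool" where "ubd f = (\<exists>M. ub M f)"
definition dser :: "var \<Rightarrow> ser \<Rightarrow> bool" where "dser v f = (\<forall>j. pdf v (f j))"
definition Fs :: "ser \<Rightarrow> real \<Rightarrow> (nat \<Rightarrow> real) \<Rightarrow> real fls" where
  "Fs f s t = Abs_fls (\<lambda>i. f (- i) s t)"

lemma ubI: "ub M f \<Longrightarrow> ubd f" by (auto simp: ubd_def)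
lemma ubD: "ub M f \<Longrightarrow> M < j \<Longrightarrow> f j s t = 0" by (auto simp: ub_def)
lemma ub_mono: "ub M f \<Longrightarrow> M \<le> M' \<Longrightarrow> ub M' f" by (auto simp: ub_def)

lemma Fs_nth: "ubd f \<Longrightarrow> Fs f s t $$ i = f (- i) s t"
proof -
  assume "ubd f"
  then obtain M where M: "ub M f" by (auto simp: ubd_def)
  show ?thesis unfolding Fs_def
    by (rule nth_Abs_fls_lower_bound[where N = "- M"]) (use M in \<open>auto simp: ub_def\<close>)
qed

lemma ser_eqI: "ubd f \<Longrightarrow> ubd g \<Longrightarrow> (\<And>s t. Fs f s t = Fs g s t) \<Longrightarrow> f = g"
proof (intro ext)
  fix j s t assume A: "ubd f" "ubd g" "\<And>s t. Fs f s t = Fs g s t"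
  have "Fs f s t $$ (-j) = Fs g s t $$ (-j)" using A(3) by simp
  then show "f j s t = g j s t" using A(1,2) by (simp add: Fs_nth)
qed

lemma Fs_eqI: "ubd f \<Longrightarrow> (\<And>i. Fs f s t $$ i = G $$ i) \<Longrightarrow> Fs f s t = G"
  by (simp add: fls_eq_iff)

lemma ub_sadd: "ub M f \<Longrightarrow> ub M g \<Longrightarrow> ub M (sadd f g)" by (simp add: ub_def sadd_def)
lemma ub_ssub: "ub M f \<Longrightarrow> ub M g \<Longrightarrow> ub M (ssub f g)" by (simp add: ub_def ssub_def)
lemma ubd_sadd[simp,intro]: "ubd f \<Longrightarrow> ubd g \<Longrightarrow> ubd (sadd f g)"
  unfolding ubd_def by (meson max.cobounded1 max.cobounded2 ub_mono ub_sadd)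
lemma ubd_ssub[simp,intro]: "ubd f \<Longrightarrow> ubd g \<Longrightarrow> ubd (ssub f g)"
  unfolding ubd_def by (meson max.cobounded1 max.cobounded2 ub_mono ub_ssub)
lemma ub_cst: "ub 0 (cst c)" by (simp add: ub_def cst_def)
lemma ubd_cst[simp,intro]: "ubd (cst c)" using ub_cst ubI by blast
lemma ub_sone: "ub 0 sone" by (simp add: ub_def sone_def)
lemma ubd_sone[simp,intro]: "ubd sone" using ub_sone ubI by blast

lemma Fs_sadd[simp]: "ubd f \<Longrightarrow> ubd g \<Longrightarrow> Fs (sadd f g) s t = Fs f s t + Fs g s t"
  by (rule Fs_eqI, simp) (simp add: Fs_nth, simp add: sadd_def)
lemma Fs_ssub[simp]: "ubd f \<Longrightarrow> ubd g \<Longrightarrow> Fs (ssub f g) s t = Fs f s t - Fs g s t"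
  by (rule Fs_eqI, simp) (simp add: Fs_nth, simp add: ssub_def)
lemma Fs_cst[simp]: "Fs (cst c) s t = fls_const (c s t)"
  by (rule Fs_eqI, simp) (simp add: Fs_nth, simp add: cst_def)
lemma Fs_sone[simp]: "Fs sone s t = 1"
  by (rule Fs_eqI, simp) (simp add: Fs_nth, simp add: sone_def)

lemma smul_range: assumes "ub Mf f" "ub Mg g"
  shows "smul f g j s t = (\<Sum>i\<in>{j-Mg..Mf}. f i s t * g (j - i) s t)"
  unfolding smul_def
proof (rule sum.mono_neutral_left)
  show "finite {j - Mg..Mf}" by simp
  show "{i. f i s t \<noteq> 0 \<and> g (j - i) s t \<noteq> 0} \<subseteq> {j - Mg..Mf}"
  proof
    fix x assume "x \<in> {i. f i s t \<noteq> 0 \<and> g (j - i) s t \<noteq> 0}"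
    hence x: "f x s t \<noteq> 0" "g (j - x) s t \<noteq> 0" by auto
    have "x \<le> Mf" by (rule ccontr) (use ubD[OF assms(1)] x in auto)
    moreover have "j - x \<le> Mg" by (rule ccontr) (use ubD[OF assms(2)] x in auto)
    ultimately show "x \<in> {j - Mg..Mf}" by auto
  qed
  show "\<forall>i\<in>{j - Mg..Mf} - {i. f i s t \<noteq> 0 \<and> g (j - i) s t \<noteq> 0}. f i s t * g (j - i) s t = 0"
    by auto
qed

lemma ub_smul: assumes "ub Mf f" "ub Mg g" shows "ub (Mf + Mg) (smul f g)"
  unfolding ub_def
proof (intro allI impI)
  fix j s t assume j: "Mf + Mg < j"
  show "smul f g j s t = 0" unfolding smul_range[OF assms]
    using j by (intro sum.neutral) auto
qed

lemma ubd_smul[simp,intro]: "ubd f \<Longrightarrow> ubd g \<Longrightarrow> ubd (smul f g)"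
  unfolding ubd_def using ub_smul by blast

lemma fls_mult_sum:
  fixes u w :: "'a::comm_ring fls"
  assumes "finite A" "\<And>l. u $$ l \<noteq> 0 \<Longrightarrow> w $$ (n - l) \<noteq> 0 \<Longrightarrow> l \<in> A"
  shows "(u * w) $$ n = (\<Sum>l\<in>A. u $$ l * w $$ (n - l))"
proof -
  let ?I = "{fls_subdegree u..n - fls_subdegree w}"
  have "(u * w) $$ n = (\<Sum>l\<in>?I. u $$ l * w $$ (n - l))" by (rule fls_times_nth(2))
  also have "\<dots> = (\<Sum>l\<in>?I \<union> A. u $$ l * w $$ (n - l))"
    by (rule sum.mono_neutral_left) (use assms in auto)
  also have "\<dots> = (\<Sum>l\<in>A. u $$ l * w $$ (n - l))"
  proof (rule sum.mono_neutral_right)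
    show "\<forall>i\<in>?I \<union> A - A. u $$ i * w $$ (n - i) = 0" using assms(2) by force
  qed (use assms in auto)
  finally show ?thesis .
qed


lemma Fs_smul[simp]: assumes "ubd f" "ubd g" shows "Fs (smul f g) s t = Fs f s t * Fs g s t"
proof (rule Fs_eqI)
  show "ubd (smul f g)" using assms by simp
  obtain Mf Mg where M: "ub Mf f" "ub Mg g" using assms by (auto simp: ubd_def)
  fix n
  have "Fs (smul f g) s t $$ n = (\<Sum>i\<in>{-n-Mg..Mf}. f i s t * g (-n - i) s t)"
    using assms by (simp add: Fs_nth smul_range[OF M])
  also have "\<dots> = (\<Sum>l\<in>{-Mf..n+Mg}. f (-l) s t * g (-(n - l)) s t)"
    by (rule sum.reindex_bij_witness[of _ uminus uminus]) auto
  also have "\<dots> = (Fs f s t * Fs g s t) $$ n"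
  proof (subst fls_mult_sum[where A = "{-Mf..n+Mg}"])
    show "finite {-Mf..n+Mg}" by simp
    fix l assume l: "Fs f s t $$ l \<noteq> 0" "Fs g s t $$ (n - l) \<noteq> 0"
    have "-l \<le> Mf" by (rule ccontr) (use ubD[OF M(1)] l assms in \<open>auto simp: Fs_nth\<close>)
    moreover have "-(n-l) \<le> Mg" by (rule ccontr) (use ubD[OF M(2)] l assms in \<open>auto simp: Fs_nth\<close>)
    ultimately show "l \<in> {-Mf..n+Mg}" by auto
  qed (use assms in \<open>simp add: Fs_nth\<close>)
  finally show "Fs (smul f g) s t $$ n = (Fs f s t * Fs g s t) $$ n" .
qed

lemma smul_cst: "smul (cst c) f j s t = c s t * f j s t"
  unfolding smul_def cst_def
proof -
  have "{i. (if i = 0 then c else (\<lambda>s t. 0)) s t \<noteq> 0 \<and> f (j - i) s t \<noteq> 0} \<subseteq> {0}" by auto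
  then show "(\<Sum>i\<in>{i. (if i = 0 then c else (\<lambda>s t. 0)) s t \<noteq> 0 \<and> f (j - i) s t \<noteq> 0}.
        (if i = 0 then c else (\<lambda>s t. 0)) s t * f (j - i) s t) = c s t * f j s t"
    by (subst sum.mono_neutral_left[where T = "{0}"]) auto
qed

lemma spow_0[simp]: "spow f 0 = sone" by (simp add: spow_def)
lemma spow_Suc: "spow f (Suc n) = smul f (spow f n)" by (simp add: spow_def)

lemma ub_spow: "ub M f \<Longrightarrow> ub (int n * M) (spow f n)"
proof (induction n)
  case 0 then show ?case using ub_sone by simp
next
  case (Suc n)
  have "ub (M + int n * M) (smul f (spow f n))" by (rule ub_smul) (use Suc in auto)
  then show ?case by (simp add: spow_Suc algebra_simps)
qed

lemma ubd_spow[simp,intro]: "ubd f \<Longrightarrow> ubd (spow f n)"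
  using ub_spow ubI unfolding ubd_def by blast

lemma Fs_spow[simp]: "ubd f \<Longrightarrow> Fs (spow f n) s t = Fs f s t ^ n"
  by (induction n) (simp_all add: spow_Suc)

definition Dk :: "real fls \<Rightarrow> real fls" where "Dk F = - fls_shift (-2) (fls_deriv F)"

lemma Dk_nth[simp]: "Dk F $$ i = of_int (1 - i) * F $$ (i - 1)"
  by (simp add: Dk_def algebra_simps)

lemma Dk_add[simp]: "Dk (F + G) = Dk F + Dk G" by (rule fls_eqI) (simp add: algebra_simps)
lemma Dk_diff[simp]: "Dk (F - G) = Dk F - Dk G" by (rule fls_eqI) (simp add: algebra_simps)
lemma Dk_const[simp]: "Dk (fls_const c) = 0" by (rule fls_eqI) simp
lemma Dk_one[simp]: "Dk 1 = 0" using Dk_const[of 1] by simp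

lemma Dk_mult[simp]: "Dk (F * G) = Dk F * G + F * Dk G"
proof -
  have "fls_shift (-2) (fls_deriv F * G) = fls_shift (-2) (fls_deriv F) * G"
    using fls_shifted_times_simps by metis
  moreover have "fls_shift (-2) (F * fls_deriv G) = F * fls_shift (-2) (fls_deriv G)"
    using fls_shifted_times_simps by metis
  ultimately show ?thesis by (simp add: Dk_def algebra_simps fls_shift_plus)
qed

lemma Dk_power: "Dk (F ^ n) = of_nat n * F ^ (n - 1) * Dk F"
proof (induction n)
  case (Suc n) then show ?case by (cases n) (simp_all add: algebra_simps)
qed simp

lemma ub_dk: "ub M f \<Longrightarrow> ub (M - 1) (dk f)" by (simp add: ub_def dk_def)
lemma ubd_dk[simp,intro]: "ubd f \<Longrightarrow> ubd (dk f)" using ub_dk ubI unfolding ubd_def by blast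

lemma Fs_dk[simp]: "ubd f \<Longrightarrow> Fs (dk f) s t = Dk (Fs f s t)"
  by (rule Fs_eqI, simp) (simp add: Fs_nth, simp add: dk_def algebra_simps)


lemma ub_zero_fun: "ub M f \<Longrightarrow> M < j \<Longrightarrow> f j = (\<lambda>s t. 0)"
  by (intro ext) (auto simp: ub_def)

lemma ub_sd: "ub M f \<Longrightarrow> ub M (sd v f)"
proof -
  assume A: "ub M f"
  show ?thesis unfolding ub_def sd_def using ub_zero_fun[OF A] by simp
qed

lemma ubd_zero[simp,intro]: "ubd (\<lambda>j s t. 0)" by (auto simp: ubd_def ub_def)
lemma Fs_zero[simp]: "Fs (\<lambda>j s t. 0) s t = 0" by (rule Fs_eqI, simp) (simp add: Fs_nth)
lemma ubd_sd[simp,intro]: "ubd f \<Longrightarrow> ubd (sd v f)" using ub_sd ubI unfolding ubd_def by blast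

lemma dser_sadd[simp,intro]: "dser v f \<Longrightarrow> dser v g \<Longrightarrow> dser v (sadd f g)"
  by (auto simp: dser_def sadd_def)
lemma dser_ssub[simp,intro]: "dser v f \<Longrightarrow> dser v g \<Longrightarrow> dser v (ssub f g)"
  by (auto simp: dser_def ssub_def)
lemma dser_cst[simp,intro]: "pdf v c \<Longrightarrow> dser v (cst c)"
  by (auto simp: dser_def cst_def)
lemma dser_sone[simp,intro]: "dser v sone"
  by (auto simp: dser_def sone_def)
lemma dser_dk[simp,intro]: "dser v f \<Longrightarrow> dser v (dk f)"
  by (auto simp: dser_def dk_def)

lemma smul_range_fun: assumes "ub Mf f" "ub Mg g"
  shows "smul f g j = (\<lambda>s t. \<Sum>i\<in>{j-Mg..Mf}. f i s t * g (j - i) s t)"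
  by (intro ext) (rule smul_range[OF assms])

lemma dser_smul[simp,intro]: assumes "ubd f" "ubd g" "dser v f" "dser v g" shows "dser v (smul f g)"
proof -
  obtain Mf Mg where M: "ub Mf f" "ub Mg g" using assms by (auto simp: ubd_def)
  show ?thesis unfolding dser_def smul_range_fun[OF M]
    using assms(3,4) unfolding dser_def by (intro allI pdf_sum) auto
qed

lemma dser_spow[simp,intro]: "ubd f \<Longrightarrow> dser v f \<Longrightarrow> dser v (spow f n)"
  by (induction n) (simp_all add: spow_Suc)

lemma sd_sadd[simp]: "dser v f \<Longrightarrow> dser v g \<Longrightarrow> sd v (sadd f g) = sadd (sd v f) (sd v g)"
  by (auto simp: dser_def sadd_def sd_def pd_add)
lemma sd_ssub[simp]: "dser v f \<Longrightarrow> dser v g \<Longrightarrow> sd v (ssub f g) = ssub (sd v f) (sd v g)"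
  by (auto simp: dser_def ssub_def sd_def pd_diff)
lemma sd_cst[simp]: "sd v (cst c) = cst (pd v c)"
  by (auto simp: sd_def cst_def)
lemma sd_sone[simp]: "sd v sone = (\<lambda>j s t. 0)"
  by (auto simp: sd_def sone_def)
lemma sd_dk[simp]: "dser v f \<Longrightarrow> sd v (dk f) = dk (sd v f)"
  by (auto simp: dser_def dk_def sd_def pd_cmult)

lemma sd_smul[simp]: assumes "ubd f" "ubd g" "dser v f" "dser v g"
  shows "sd v (smul f g) = sadd (smul (sd v f) g) (smul f (sd v g))"
proof (intro ext)
  fix j s t
  obtain Mf Mg where M: "ub Mf f" "ub Mg g" using assms by (auto simp: ubd_def)
  have M': "ub Mf (sd v f)" "ub Mg (sd v g)" using M ub_sd by auto
  have d: "\<And>i. pdf v (f i)" "\<And>i. pdf v (g i)" using assms(3,4) by (auto simp: dser_def)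
  show "sd v (smul f g) j s t = sadd (smul (sd v f) g) (smul f (sd v g)) j s t"
  proof -
    have "sd v (smul f g) j s t = pd v (\<lambda>s t. \<Sum>i\<in>{j-Mg..Mf}. f i s t * g (j - i) s t) s t"
      by (simp add: sd_def smul_range_fun[OF M])
    also have "\<dots> = (\<Sum>i\<in>{j-Mg..Mf}. pd v (f i) s t * g (j - i) s t + f i s t * pd v (g (j - i)) s t)"
      by (subst pd_sum) (use d in \<open>auto simp: pd_mult\<close>)
    also have "\<dots> = sadd (smul (sd v f) g) (smul f (sd v g)) j s t"
      by (simp only: sadd_def smul_range[OF M'(1) M(2)] smul_range[OF M(1) M'(2)]) (simp add: sum.distrib sd_def)
    finally show ?thesis .
  qed
qed

lemma sd_spow: assumes "ubd f" "dser v f"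
  shows "Fs (sd v (spow f n)) s t = of_nat n * Fs f s t ^ (n - 1) * Fs (sd v f) s t"
proof (induction n)
  case 0 then show ?case
    by (simp add: sd_sone)
next
  case (Suc n)
  then show ?case using assms
    by (cases n) (simp_all add: spow_Suc algebra_simps)
qed




section \<open>Shift: the Vandermonde computation\<close>

definition gc :: "int \<Rightarrow> int \<Rightarrow> real" where
  "gc m r = (if 0 \<le> r then (of_int m gchoose nat r) else 0)"

lemma vander_int:
  assumes "j \<le> m + n"
  shows "(\<Sum>i\<in>{j-n..m}. gc m (m - i) * gc n (n - (j - i))) = gc (m + n) (m + n - j)"
proof -
  let ?N = "nat (m + n - j)"
  have "(\<Sum>i\<in>{j-n..m}. gc m (m - i) * gc n (n - (j - i)))
      = (\<Sum>k\<in>{0..?N}. (of_int m gchoose k) * (of_int n gchoose (?N - k)))"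
  proof (rule sum.reindex_bij_witness[of _ "\<lambda>k. m - int k" "\<lambda>i. nat (m - i)"])
    fix i assume i: "i \<in> {j-n..m}"
    have e1: "nat (n - (j - i)) = ?N - nat (m - i)" using i assms by auto
    show "(of_int m gchoose nat (m - i)) * (of_int n gchoose (?N - nat (m - i))) =
       gc m (m - i) * gc n (n - (j - i))" using i e1 by (simp add: gc_def)
  qed (use assms in auto)
  also have "\<dots> = (of_int (m + n) gchoose ?N)"
    by (subst gbinomial_Vandermonde) simp
  finally show ?thesis using assms by (simp add: gc_def)
qed


definition sh :: "real \<Rightarrow> int \<Rightarrow> (int \<Rightarrow> real) \<Rightarrow> int \<Rightarrow> real" where
  "sh b M F j = (\<Sum>m\<in>{j..M}. F m * gc m (m - j) * b ^ nat (m - j))"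

lemma sh_mult:
  "sh b (Mf + Mg) (\<lambda>q. \<Sum>m\<in>{q-Mg..Mf}. F m * G (q - m)) j
   = (\<Sum>i\<in>{j-Mg..Mf}. sh b Mf F i * sh b Mg G (j - i))"
proof -
  define D where "D = Sigma {j-Mg..Mf} (\<lambda>m. {j-m..Mg})"
  define c where "c = (\<lambda>q. gc q (q - j) * b ^ nat (q - j))"
  have fD: "finite D" by (simp add: D_def)
  have L: "sh b (Mf + Mg) (\<lambda>q. \<Sum>m\<in>{q-Mg..Mf}. F m * G (q - m)) j
      = (\<Sum>(m,n)\<in>D. F m * G n * c (m + n))"
  proof -
    have "sh b (Mf + Mg) (\<lambda>q. \<Sum>m\<in>{q-Mg..Mf}. F m * G (q - m)) j
        = (\<Sum>q\<in>{j..Mf+Mg}. \<Sum>m\<in>{q-Mg..Mf}. F m * G (q - m) * c q)"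
      by (simp add: sh_def c_def sum_distrib_right mult.assoc)
    also have "\<dots> = (\<Sum>(q,m)\<in>Sigma {j..Mf+Mg} (\<lambda>q. {q-Mg..Mf}). F m * G (q - m) * c q)"
      by (rule sum.Sigma) auto
    also have "\<dots> = (\<Sum>(m,n)\<in>D. F m * G n * c (m + n))"
      by (rule sum.reindex_bij_witness[of _ "\<lambda>(m,n). (m + n, m)" "\<lambda>(q,m). (m, q - m)"])
         (auto simp: D_def)
    finally show ?thesis .
  qed
  have R: "(\<Sum>i\<in>{j-Mg..Mf}. sh b Mf F i * sh b Mg G (j - i))
      = (\<Sum>(m,n)\<in>D. F m * G n * c (m + n))"
  proof -
    define h where "h = (\<lambda>i m n. F m * gc m (m - i) * b ^ nat (m - i) * (G n * gc n (n - (j - i)) * b ^ nat (n - (j - i))))"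
    have "(\<Sum>i\<in>{j-Mg..Mf}. sh b Mf F i * sh b Mg G (j - i))
        = (\<Sum>i\<in>{j-Mg..Mf}. \<Sum>m\<in>{i..Mf}. \<Sum>n\<in>{j-i..Mg}. h i m n)"
      by (simp add: sh_def h_def sum_product)
    also have "\<dots> = (\<Sum>i\<in>{j-Mg..Mf}. \<Sum>(m,n)\<in>Sigma {i..Mf} (\<lambda>_. {j-i..Mg}). h i m n)"
      by (intro sum.cong refl sum.Sigma) auto
    also have "\<dots> = (\<Sum>(i,mn)\<in>Sigma {j-Mg..Mf} (\<lambda>i. Sigma {i..Mf} (\<lambda>_. {j-i..Mg})). h i (fst mn) (snd mn))"
      by (subst sum.Sigma) (auto simp: case_prod_beta)
    also have "\<dots> = (\<Sum>(mn,i)\<in>Sigma D (\<lambda>(m,n). {j-n..m}). h i (fst mn) (snd mn))"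
      by (rule sum.reindex_bij_witness[of _ "\<lambda>(mn,i). (i,mn)" "\<lambda>(i,mn). (mn,i)"])
         (auto simp: D_def)
    also have "\<dots> = (\<Sum>mn\<in>D. \<Sum>i\<in>(\<lambda>(m,n). {j-n..m}) mn. h i (fst mn) (snd mn))"
      by (subst sum.Sigma) (auto simp: fD case_prod_beta)
    also have "\<dots> = (\<Sum>(m,n)\<in>D. F m * G n * c (m + n))"
    proof (rule sum.cong[OF refl])
      fix mn assume mnD: "mn \<in> D"
      obtain m n where mnE: "mn = (m, n)" by (cases mn)
      have mn: "(m, n) \<in> D" using mnD mnE by simp
      have "(\<Sum>i\<in>{j-n..m}. h i m n) = (\<Sum>i\<in>{j-n..m}. F m * G n * b ^ nat (m + n - j) * (gc m (m - i) * gc n (n - (j - i))))"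
      proof (rule sum.cong[OF refl])
        fix i assume i: "i \<in> {j-n..m}"
        have "nat (m + n - j) = nat (m - i) + nat (n - (j - i))" using i by auto
        then show "h i m n = F m * G n * b ^ nat (m + n - j) * (gc m (m - i) * gc n (n - (j - i)))"
          by (simp add: h_def power_add)
      qed
      also have "\<dots> = F m * G n * b ^ nat (m + n - j) * gc (m + n) (m + n - j)"
        using mn by (simp add: sum_distrib_left[symmetric] vander_int D_def)
      finally show "(\<Sum>i\<in>(\<lambda>(m,n). {j-n..m}) mn. h i (fst mn) (snd mn)) = (case mn of (m, n) \<Rightarrow> F m * G n * c (m + n))"
        by (simp add: c_def mnE)
    qed
    finally show ?thesis .
  qed
  show ?thesis using L R by simp
qed


lemma gc_absorb: "0 \<le> r \<Longrightarrow> of_int (r + 1) * gc m (r + 1) = of_int m * gc (m - 1) r"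
proof -
  assume r: "0 \<le> r"
  have "of_nat (Suc (nat r)) * (of_int m gchoose Suc (nat r)) = (of_int m :: real) * ((of_int m - 1) gchoose (nat r))"
    by (rule gbinomial_absorption)
  moreover have "nat (r + 1) = Suc (nat r)" using r by auto
  moreover have "real (Suc (nat r)) = of_int (r + 1)" using r by simp
  ultimately show ?thesis using r by (simp add: gc_def ac_simps)
qed

lemma sh_dk_reindex:
  "sh b (M - 1) (\<lambda>m. of_int (m + 1) * F (m + 1)) j
   = (\<Sum>m\<in>{j+1..M}. F m * of_int m * gc (m - 1) (m - 1 - j) * b ^ nat (m - 1 - j))"
  unfolding sh_def
  by (rule sum.reindex_bij_witness[of _ "\<lambda>m. m - 1" "\<lambda>m. m + 1"]) (auto simp: algebra_simps)

lemma sh_dk1: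
  "of_int (j + 1) * sh b M F (j + 1)
   = (\<Sum>m\<in>{j+1..M}. F m * of_int m * gc (m - 1) (m - 1 - j) * b ^ nat (m - 1 - j))"
  unfolding sh_def sum_distrib_left
proof (rule sum.cong[OF refl])
  fix m assume m: "m \<in> {j+1..M}"
  have "of_int (j + 1) * gc m (m - (j + 1)) = of_int m * gc (m - 1) (m - 1 - j)"
  proof -
    have "of_int (j + 1) * gc m (m - (j + 1)) = of_int m * gc m (m - (j+1)) - of_int (m - (j + 1)) * gc m (m - (j + 1))"
      by (simp add: algebra_simps)
    also have "of_int (m - (j + 1)) * gc m (m - (j + 1)) = of_int m * gc m (m - (j+1)) - of_int m * gc (m - 1) (m - 1 - j)"
    proof -
      have "(of_int m - of_nat (nat (m - (j+1)))) * (of_int m gchoose nat (m - (j+1))) = (of_int m :: real) * ((of_int m - 1) gchoose nat (m - (j+1)))"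
        by (rule gbinomial_absorb_comp)
      then show ?thesis using m by (simp add: gc_def algebra_simps)
    qed
    finally show ?thesis by simp
  qed
  moreover have e: "m - (j + 1) = m - 1 - j" by simp
  ultimately have k: "of_int (j + 1) * gc m (m - 1 - j) = of_int m * gc (m - 1) (m - 1 - j)" by simp
  have "of_int (j + 1) * (F m * gc m (m - (j + 1)) * b ^ nat (m - (j + 1)))
      = F m * (of_int (j + 1) * gc m (m - 1 - j)) * b ^ nat (m - 1 - j)"
    by (simp only: e) (simp add: ac_simps)
  also have "\<dots> = F m * (of_int m * gc (m - 1) (m - 1 - j)) * b ^ nat (m - 1 - j)"
    by (simp only: k)
  finally show "of_int (j + 1) * (F m * gc m (m - (j + 1)) * b ^ nat (m - (j + 1))) =
         F m * of_int m * gc (m - 1) (m - 1 - j) * b ^ nat (m - 1 - j)"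
    by (simp add: ac_simps)
qed

lemma sh_dk2:
  "(\<Sum>m\<in>{j..M}. F m * gc m (m - j) * (of_nat (nat (m - j)) * b ^ (nat (m - j) - 1)))
   = (\<Sum>m\<in>{j+1..M}. F m * of_int m * gc (m - 1) (m - 1 - j) * b ^ nat (m - 1 - j))"
proof -
  have "(\<Sum>m\<in>{j..M}. F m * gc m (m - j) * (of_nat (nat (m - j)) * b ^ (nat (m - j) - 1)))
      = (\<Sum>m\<in>{j+1..M}. F m * gc m (m - j) * (of_nat (nat (m - j)) * b ^ (nat (m - j) - 1)))"
    by (rule sum.mono_neutral_right) auto
  also have "\<dots> = (\<Sum>m\<in>{j+1..M}. F m * of_int m * gc (m - 1) (m - 1 - j) * b ^ nat (m - 1 - j))"
  proof (rule sum.cong[OF refl])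
    fix m assume m: "m \<in> {j+1..M}"
    have k1: "of_int (m - j) * gc m (m - j) = of_int m * gc (m - 1) (m - 1 - j)"
      using gc_absorb[of "m - 1 - j" m] m by simp
    have k2: "nat (m - j) - 1 = nat (m - 1 - j)" using m by auto
    have k3: "real (nat (m - j)) = of_int (m - j)" using m by simp
    have "F m * gc m (m - j) * (of_nat (nat (m - j)) * b ^ (nat (m - j) - 1))
        = F m * (of_int (m - j) * gc m (m - j)) * b ^ nat (m - 1 - j)"
      by (simp only: k2 k3) (simp add: ac_simps)
    also have "\<dots> = F m * (of_int m * gc (m - 1) (m - 1 - j)) * b ^ nat (m - 1 - j)"
      by (simp only: k1)
    finally show "F m * gc m (m - j) * (of_nat (nat (m - j)) * b ^ (nat (m - j) - 1)) =
          F m * of_int m * gc (m - 1) (m - 1 - j) * b ^ nat (m - 1 - j)"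
      by (simp add: ac_simps)
  qed
  finally show ?thesis .
qed




declare pdf_add[simp] pdf_diff[simp] pdf_mult[simp] pdf_minus[simp] pdf_power[simp] pdf_cmult[simp]

lemma sshift_sh: assumes "ub M f"
  shows "sshift a f j s t = sh (- a s t) M (\<lambda>m. f m s t) j"
  unfolding sshift_def sh_def
proof (rule sum.mono_neutral_cong_left)
  show "{m. j \<le> m \<and> f m s t \<noteq> 0} \<subseteq> {j..M}"
  proof
    fix m assume "m \<in> {m. j \<le> m \<and> f m s t \<noteq> 0}"
    then have "j \<le> m" "f m s t \<noteq> 0" by auto
    moreover have "m \<le> M" by (rule ccontr) (use ubD[OF assms] \<open>f m s t \<noteq> 0\<close> in auto)
    ultimately show "m \<in> {j..M}" by auto
  qed
qed (auto simp: gc_def)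

lemma sshift_fun: assumes "ub M f"
  shows "sshift a f j = (\<lambda>s t. \<Sum>m\<in>{j..M}. f m s t * gc m (m - j) * (- a s t) ^ nat (m - j))"
  by (intro ext) (simp add: sshift_sh[OF assms] sh_def)

lemma ub_shift: "ub M f \<Longrightarrow> ub M (sshift a f)"
  unfolding ub_def by (auto simp: sshift_sh[of M f] ub_def sh_def)

lemma ubd_shift[simp,intro]: "ubd f \<Longrightarrow> ubd (sshift a f)"
  using ub_shift ubI unfolding ubd_def by blast

lemma shift_smul: assumes "ubd f" "ubd g"
  shows "sshift a (smul f g) = smul (sshift a f) (sshift a g)"
proof (intro ext)
  fix j s t
  obtain Mf Mg where M: "ub Mf f" "ub Mg g" using assms by (auto simp: ubd_def)
  have "sshift a (smul f g) j s t = sh (- a s t) (Mf + Mg) (\<lambda>q. \<Sum>m\<in>{q-Mg..Mf}. f m s t * g (q - m) s t) j"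
    using sshift_sh[OF ub_smul[OF M]] smul_range[OF M] by simp
  also have "\<dots> = (\<Sum>i\<in>{j-Mg..Mf}. sh (- a s t) Mf (\<lambda>m. f m s t) i * sh (- a s t) Mg (\<lambda>m. g m s t) (j - i))"
    by (rule sh_mult)
  also have "\<dots> = smul (sshift a f) (sshift a g) j s t"
    by (simp add: smul_range[OF ub_shift[OF M(1)] ub_shift[OF M(2)]] sshift_sh[OF M(1)] sshift_sh[OF M(2)])
  finally show "sshift a (smul f g) j s t = smul (sshift a f) (sshift a g) j s t" .
qed

lemma shift_sadd: assumes "ubd f" "ubd g"
  shows "sshift a (sadd f g) = sadd (sshift a f) (sshift a g)"
proof (intro ext)
  fix j s t
  obtain Mf Mg where M: "ub Mf f" "ub Mg g" using assms by (auto simp: ubd_def)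
  have M': "ub (max Mf Mg) f" "ub (max Mf Mg) g" using M ub_mono by auto
  have "sshift a (sadd f g) j s t = sh (- a s t) (max Mf Mg) (\<lambda>m. sadd f g m s t) j"
    by (rule sshift_sh[OF ub_sadd[OF M']])
  also have "\<dots> = sh (- a s t) (max Mf Mg) (\<lambda>m. f m s t) j + sh (- a s t) (max Mf Mg) (\<lambda>m. g m s t) j"
    by (simp add: sh_def sadd_def sum.distrib ring_distribs)
  also have "\<dots> = sadd (sshift a f) (sshift a g) j s t"
    by (simp add: sadd_def sshift_sh[OF M'(1)] sshift_sh[OF M'(2)])
  finally show "sshift a (sadd f g) j s t = sadd (sshift a f) (sshift a g) j s t" .
qed

lemma shift_ssub: assumes "ubd f" "ubd g"
  shows "sshift a (ssub f g) = ssub (sshift a f) (sshift a g)"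
proof (intro ext)
  fix j s t
  obtain Mf Mg where M: "ub Mf f" "ub Mg g" using assms by (auto simp: ubd_def)
  have M': "ub (max Mf Mg) f" "ub (max Mf Mg) g" using M ub_mono by auto
  have "sshift a (ssub f g) j s t = sh (- a s t) (max Mf Mg) (\<lambda>m. ssub f g m s t) j"
    by (rule sshift_sh[OF ub_ssub[OF M']])
  also have "\<dots> = sh (- a s t) (max Mf Mg) (\<lambda>m. f m s t) j - sh (- a s t) (max Mf Mg) (\<lambda>m. g m s t) j"
    by (simp add: sh_def ssub_def sum_subtractf[symmetric] algebra_simps)
  also have "\<dots> = ssub (sshift a f) (sshift a g) j s t"
    by (simp add: ssub_def sshift_sh[OF M'(1)] sshift_sh[OF M'(2)])
  finally show "sshift a (ssub f g) j s t = ssub (sshift a f) (sshift a g) j s t" .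
qed

lemma shift_sone: "sshift a sone = sone"
proof (intro ext)
  fix j s t
  have "sshift a sone j s t = sh (- a s t) 0 (\<lambda>m. sone m s t) j"
    by (rule sshift_sh[OF ub_sone])
  also have "\<dots> = (\<Sum>m\<in>{j..0}. (if m = 0 then gc 0 (- j) * (- a s t) ^ nat (- j) else 0))"
    unfolding sh_def by (rule sum.cong) (auto simp: sone_def)
  also have "\<dots> = (if j \<le> 0 then gc 0 (- j) * (- a s t) ^ nat (- j) else 0)"
    by (simp add: sum.delta)
  also have "\<dots> = sone j s t"
    by (auto simp: sone_def gc_def gbinomial_0_left)
  finally show "sshift a sone j s t = sone j s t" .
qed

lemma shift_spow: "ubd f \<Longrightarrow> sshift a (spow f n) = spow (sshift a f) n"
  by (induction n) (simp_all add: shift_sone spow_Suc shift_smul)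

lemma dk_shift: assumes "ubd f" shows "dk (sshift a f) = sshift a (dk f)"
proof (intro ext)
  fix j s t
  obtain M where M: "ub M f" using assms by (auto simp: ubd_def)
  have "dk (sshift a f) j s t = of_int (j + 1) * sh (- a s t) M (\<lambda>m. f m s t) (j + 1)"
    by (simp add: dk_def sshift_sh[OF M])
  also have "\<dots> = sh (- a s t) (M - 1) (\<lambda>m. of_int (m + 1) * f (m + 1) s t) j"
    by (simp only: sh_dk1 sh_dk_reindex[of _ _ "\<lambda>m. f m s t"])
  also have "\<dots> = sshift a (dk f) j s t"
    using sshift_sh[OF ub_dk[OF M], of a j s t] by (simp add: dk_def)
  finally show "dk (sshift a f) j s t = sshift a (dk f) j s t" .
qed

lemma pd_term: assumes "pdf v F" "pdf v a"
  shows "pd v (\<lambda>s t. F s t * c * (- a s t) ^ n) s t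
    = pd v F s t * c * (- a s t) ^ n + F s t * c * (of_nat n * (- a s t) ^ (n - 1) * (- pd v a s t))"
proof -
  have p1: "pdf v (\<lambda>s t. F s t * c)" "pdf v (\<lambda>s t. (- a s t) ^ n)" using assms by auto
  have "pd v (\<lambda>s t. F s t * c * (- a s t) ^ n) s t
      = pd v (\<lambda>s t. F s t * c) s t * (- a s t) ^ n + F s t * c * pd v (\<lambda>s t. (- a s t) ^ n) s t"
    using pd_mult[OF p1] by (simp add: fun_eq_iff)
  also have "pd v (\<lambda>s t. F s t * c) s t = pd v F s t * c"
    using pd_mult[OF assms(1) pdf_const[of v c]] by (simp add: fun_eq_iff)
  also have "pd v (\<lambda>s t. (- a s t) ^ n) s t = of_nat n * (- a s t) ^ (n - 1) * (- pd v a s t)"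
    using pd_power[OF pdf_minus[OF assms(2)], of n] pd_minus[OF assms(2)] by (simp add: fun_eq_iff)
  finally show ?thesis .
qed

lemma sd_shift: assumes "ubd f" "dser v f" "pdf v a"
  shows "sd v (sshift a f) = ssub (sshift a (sd v f)) (smul (cst (pd v a)) (sshift a (dk f)))"
proof (intro ext)
  fix j s t
  obtain M where M: "ub M f" using assms by (auto simp: ubd_def)
  have df: "\<And>m. pdf v (f m)" using assms(2) by (auto simp: dser_def)
  let ?b = "- a s t"
  have "sd v (sshift a f) j s t = pd v (\<lambda>s t. \<Sum>m\<in>{j..M}. f m s t * gc m (m - j) * (- a s t) ^ nat (m - j)) s t"
    by (simp add: sd_def sshift_fun[OF M])
  also have "\<dots> = (\<Sum>m\<in>{j..M}. pd v (\<lambda>s t. f m s t * gc m (m - j) * (- a s t) ^ nat (m - j)) s t)"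
    by (subst pd_sum) (use df assms(3) in auto)
  also have "\<dots> = (\<Sum>m\<in>{j..M}. pd v (f m) s t * gc m (m - j) * ?b ^ nat (m - j))
      + (- pd v a s t) * (\<Sum>m\<in>{j..M}. f m s t * gc m (m - j) * (of_nat (nat (m - j)) * ?b ^ (nat (m - j) - 1)))"
  proof -
    have "(\<Sum>m\<in>{j..M}. pd v (\<lambda>s t. f m s t * gc m (m - j) * (- a s t) ^ nat (m - j)) s t)
       = (\<Sum>m\<in>{j..M}. pd v (f m) s t * gc m (m - j) * ?b ^ nat (m - j)
           + (- pd v a s t) * (f m s t * gc m (m - j) * (of_nat (nat (m - j)) * ?b ^ (nat (m - j) - 1))))"
      by (rule sum.cong[OF refl], subst pd_term[OF df assms(3)]) (simp add: algebra_simps)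
    then show ?thesis by (simp only: sum.distrib sum_distrib_left)
  qed
  also have "(\<Sum>m\<in>{j..M}. f m s t * gc m (m - j) * (of_nat (nat (m - j)) * ?b ^ (nat (m - j) - 1)))
      = sh ?b (M - 1) (\<lambda>m. of_int (m + 1) * f (m + 1) s t) j"
    by (simp only: sh_dk2 sh_dk_reindex[of _ _ "\<lambda>m. f m s t"])
  also have "\<dots> = sshift a (dk f) j s t"
    using sshift_sh[OF ub_dk[OF M], of a j s t] by (simp add: dk_def)
  also have "(\<Sum>m\<in>{j..M}. pd v (f m) s t * gc m (m - j) * ?b ^ nat (m - j)) = sshift a (sd v f) j s t"
    using sshift_sh[OF ub_sd[OF M, of v], of a j s t] by (simp add: sh_def sd_def)
  finally show "sd v (sshift a f) j s t = ssub (sshift a (sd v f)) (smul (cst (pd v a)) (sshift a (dk f))) j s t"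
    by (simp add: ssub_def smul_cst)
qed

lemma dser_shift[simp,intro]: assumes "ubd f" "dser v f" "pdf v a" shows "dser v (sshift a f)"
proof -
  obtain M where M: "ub M f" using assms by (auto simp: ubd_def)
  have df: "\<And>m. pdf v (f m)" using assms(2) by (auto simp: dser_def)
  show ?thesis unfolding dser_def sshift_fun[OF M]
    by (intro allI pdf_sum) (use df assms(3) in auto)
qed




section \<open>Truncation arguments in fls\<close>

definition zb :: "int \<Rightarrow> real fls \<Rightarrow> bool" where "zb A F = (\<forall>i<A. F $$ i = 0)"

lemma zbD: "zb A F \<Longrightarrow> i < A \<Longrightarrow> F $$ i = 0" by (simp add: zb_def)
lemma zb_mono: "zb A F \<Longrightarrow> B \<le> A \<Longrightarrow> zb B F" by (simp add: zb_def)
lemma zb_0[simp]: "zb A 0" by (simp add: zb_def)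
lemma zb_one: "zb 0 1" by (simp add: zb_def)
lemma zb_const: "zb 0 (fls_const c)" by (simp add: zb_def)
lemma zb_add: "zb A F \<Longrightarrow> zb A G \<Longrightarrow> zb A (F + G)" by (simp add: zb_def)
lemma zb_diff: "zb A F \<Longrightarrow> zb A G \<Longrightarrow> zb A (F - G)" by (simp add: zb_def)
lemma zb_uminus: "zb A F \<Longrightarrow> zb A (- F)" by (simp add: zb_def)
lemma zb_Dk: "zb A F \<Longrightarrow> zb (A + 1) (Dk F)" by (simp add: zb_def)
lemma zb_shift: "zb A F \<Longrightarrow> zb (A - int N) (fls_shift (int N) F)" by (simp add: zb_def)

lemma zb_mult: assumes "zb A F" "zb B G" shows "zb (A + B) (F * G)"
proof (cases "F = 0 \<or> G = 0")
  case True then show ?thesis by auto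
next
  case False
  have "A \<le> fls_subdegree F" using False assms(1) by (intro fls_subdegree_geI) (auto simp: zb_def)
  moreover have "B \<le> fls_subdegree G" using False assms(2) by (intro fls_subdegree_geI) (auto simp: zb_def)
  ultimately show ?thesis unfolding zb_def by (auto intro!: fls_times_nth_eq0)
qed

lemma zb_power: "zb A F \<Longrightarrow> zb (int n * A) (F ^ n)"
proof (induction n)
  case 0 then show ?case using zb_one by simp
next
  case (Suc n)
  have "zb (A + int n * A) (F * F ^ n)" by (rule zb_mult) (use Suc in auto)
  then show ?case by (simp add: algebra_simps)
qed

lemma fls_const_m1pow: "fls_const ((-1::real) ^ n) = (-1) ^ n"
proof (induction n)
  case (Suc n)
  have "fls_const ((-1::real) ^ Suc n) = fls_const (-1) * fls_const ((-1::real) ^ n)"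
    by (simp add: fls_const_mult_const)
  also have "fls_const (-1::real) = -1" by (simp add: fls_eq_iff)
  finally show ?case using Suc by simp
qed simp

lemma geo_trunc:
  fixes q w :: "real fls"
  shows "(1 + q) * (\<Sum>m\<in>{1..M}. (-1) ^ (m + 1) * q ^ (m - 1) * w) = w - w * (- q) ^ M"
proof (induction M)
  case 0 then show ?case by simp
next
  case (Suc M)
  have "(1 + q) * (\<Sum>m\<in>{1..Suc M}. (-1) ^ (m + 1) * q ^ (m - 1) * w)
      = (1 + q) * (\<Sum>m\<in>{1..M}. (-1) ^ (m + 1) * q ^ (m - 1) * w)
        + (1 + q) * ((-1) ^ (M + 2) * q ^ M * w)"
    by (simp add: algebra_simps)
  also have "(-1) ^ (M + 2) * q ^ M = (- q) ^ M"
    by (simp add: power_minus')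
  also have "(1 + q) * ((- q) ^ M * w) = w * (- q) ^ M - w * (- q) ^ Suc M"
    by (simp add: algebra_simps)
  finally show ?case using Suc by (simp add: algebra_simps)
qed

lemma shiftN_mult: "fls_shift n A * B = fls_shift n (A * (B :: real fls))"
  by (rule fls_shifted_times_simps(2))

lemma K_core:
  fixes q w Y :: "real fls"
  assumes q: "zb 1 q" and w: "zb 1 w"
    and Y: "\<And>M i. i \<le> int M \<Longrightarrow> Y $$ i = (\<Sum>m\<in>{1..M}. (-1) ^ (m + 1) * q ^ (m - 1) * w) $$ i"
  shows "fls_const c * fls_shift (int N) (1 + q) * Y = fls_const c * fls_shift (int N) w"
proof (rule fls_eqI)
  fix i
  define M where "M = nat (i + int N) + 1"
  define T where "T = (\<Sum>m\<in>{1..M}. (-1) ^ (m + 1) * q ^ (m - 1) * w)"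
  have iM: "i + int N + 1 \<le> int M" by (simp add: M_def)
  have zE: "zb (int M + 1) (Y - T)"
    unfolding zb_def using Y[of _ M] by (simp add: T_def)
  have z1: "zb (- int N) (fls_shift (int N) (1 + q))"
  proof -
    have "zb 0 (1 + q)" by (rule zb_add[OF zb_one zb_mono[OF q]]) simp
    from zb_shift[OF this, of N] show ?thesis by simp
  qed
  have zP: "zb (- int N) (fls_const c * fls_shift (int N) (1 + q))"
    using zb_mult[OF zb_const z1] by simp
  have "zb (- int N + (int M + 1)) (fls_const c * fls_shift (int N) (1 + q) * (Y - T))"
    by (rule zb_mult[OF zP zE])
  then have e1: "(fls_const c * fls_shift (int N) (1 + q) * (Y - T)) $$ i = 0"
    using iM by (intro zbD) auto
  have "fls_const c * fls_shift (int N) (1 + q) * T = fls_const c * fls_shift (int N) ((1 + q) * T)"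
    by (simp only: mult.assoc shiftN_mult)
  also have "\<dots> = fls_const c * fls_shift (int N) w - fls_const c * fls_shift (int N) (w * (- q) ^ M)"
    unfolding T_def geo_trunc by (simp add: algebra_simps)
  finally have e2: "fls_const c * fls_shift (int N) (1 + q) * T = \<dots>" .
  have "zb (1 + int M * 1) (w * (- q) ^ M)"
    by (rule zb_mult[OF w zb_power[OF zb_uminus[OF q]]])
  then have "zb (0 + (1 + int M - int N)) (fls_const c * fls_shift (int N) (w * (- q) ^ M))"
    using zb_mult[OF zb_const zb_shift] by (metis add_diff_eq mult.right_neutral)
  then have e3: "(fls_const c * fls_shift (int N) (w * (- q) ^ M)) $$ i = 0"
    using iM by (intro zbD) auto
  have "(fls_const c * fls_shift (int N) (1 + q) * Y) $$ i
      = (fls_const c * fls_shift (int N) (1 + q) * (Y - T)) $$ i + (fls_const c * fls_shift (int N) (1 + q) * T) $$ i"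
    by (simp add: algebra_simps)
  also have "\<dots> = (fls_const c * fls_shift (int N) w) $$ i"
    using e1 e2 e3 by simp
  finally show "(fls_const c * fls_shift (int N) (1 + q) * Y) $$ i = (fls_const c * fls_shift (int N) w) $$ i" .
qed


section \<open>The polynomial P and log P\<close>

lemma Qser_fun: "Qser N p j = (if - int N \<le> j \<and> j < 0 then (\<lambda>s t. p (nat (- j)) s t / p 0 s t) else (\<lambda>s t. 0))"
  by (auto simp: Qser_def)
lemma polyser_fun: "polyser N p j = (if 0 \<le> j \<and> j \<le> int N then p (N - nat j) else (\<lambda>s t. 0))"
  by (auto simp: polyser_def)

lemma ub_Qser: "ub (-1) (Qser N p)" by (simp add: ub_def Qser_def)
lemma ubd_Qser[simp,intro]: "ubd (Qser N p)" using ub_Qser ubI by blast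
lemma ub_polyser: "ub (int N) (polyser N p)" by (simp add: ub_def polyser_def)
lemma ubd_polyser[simp,intro]: "ubd (polyser N p)" using ub_polyser ubI by blast
lemma ub_logser: "ub (-1) (logser N p)" by (simp add: ub_def logser_def)
lemma ubd_logser[simp,intro]: "ubd (logser N p)" using ub_logser ubI by blast
lemma ub_dlogP_k: "ub (-1) (dlogP_k N p)"
  using ub_logser[of N p] by (auto simp: ub_def dlogP_k_def dk_def)
lemma ubd_dlogP_k[simp,intro]: "ubd (dlogP_k N p)" using ub_dlogP_k ubI by blast
lemma ub_dlogP_v: "ub 0 (dlogP_v v N p)"
  using ub_sd[OF ub_logser[of N p], of v] by (auto simp: ub_def dlogP_v_def)
lemma ubd_dlogP_v[simp,intro]: "ubd (dlogP_v v N p)" using ub_dlogP_v ubI by blast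

lemma dser_Qser[simp,intro]: assumes "\<forall>s t. p 0 s t \<noteq> 0" "\<forall>i\<le>N. pdf v (p i)"
  shows "dser v (Qser N p)"
  unfolding dser_def Qser_fun using assms by (auto intro!: pdf_divide)

lemma logser_fun: "logser N p j = (\<lambda>s t. \<Sum>m = 1..nat (- j). ((-1) ^ (m + 1) / real m) * spow (Qser N p) m j s t)"
  by (simp add: logser_def)

lemma dser_logser[simp,intro]: assumes "\<forall>s t. p 0 s t \<noteq> 0" "\<forall>i\<le>N. pdf v (p i)"
  shows "dser v (logser N p)"
proof -
  have d: "dser v (spow (Qser N p) m)" for m using assms by simp
  show ?thesis unfolding dser_def logser_fun
  proof (intro allI pdf_sum)
    fix j m show "pdf v (\<lambda>s t. ((-1) ^ (m + 1) / real m) * spow (Qser N p) m j s t)"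
      by (rule pdf_cmult) (use d in \<open>simp add: dser_def\<close>)
  qed simp
qed

lemma dser_polyser[simp,intro]: "\<forall>i\<le>N. pdf v (p i) \<Longrightarrow> dser v (polyser N p)"
  unfolding dser_def polyser_fun by auto

lemma Fs_Qser_nth: "Fs (Qser N p) s t $$ i = (if 1 \<le> i \<and> i \<le> int N then p (nat i) s t / p 0 s t else 0)"
  by (simp only: Fs_nth[OF ubd_Qser]) (simp add: Qser_def)

lemma zb_Q: "zb 1 (Fs (Qser N p) s t)"
  by (simp add: zb_def Fs_Qser_nth)

lemma Fs_polyser: assumes "\<forall>s t. p 0 s t \<noteq> 0"
  shows "Fs (polyser N p) s t = fls_const (p 0 s t) * fls_shift (int N) (1 + Fs (Qser N p) s t)"
proof (rule fls_eqI)
  fix i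
  show "Fs (polyser N p) s t $$ i = (fls_const (p 0 s t) * fls_shift (int N) (1 + Fs (Qser N p) s t)) $$ i"
  proof (cases "i = - int N")
    case True then show ?thesis by (simp only: Fs_nth[OF ubd_polyser]) (simp add: polyser_def Fs_Qser_nth)
  next
    case False
    have "N - nat (- i) = nat (i + int N)" if "- int N \<le> i" "i \<le> 0" using that by auto
    then show ?thesis using False assms by (simp only: Fs_nth[OF ubd_polyser]) (auto simp: polyser_def Fs_Qser_nth)
  qed
qed

lemma Fs_logser_nth: "Fs (logser N p) s t $$ i
    = (\<Sum>m = 1..nat i. ((-1) ^ (m + 1) / real m) * (Fs (Qser N p) s t ^ m) $$ i)"
proof -
  have "Fs (logser N p) s t $$ i = (\<Sum>m = 1..nat i. ((-1) ^ (m + 1) / real m) * spow (Qser N p) m (- i) s t)"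
    by (simp only: Fs_nth[OF ubd_logser]) (simp add: logser_def)
  also have "\<dots> = (\<Sum>m = 1..nat i. ((-1) ^ (m + 1) / real m) * (Fs (Qser N p) s t ^ m) $$ i)"
    by (intro sum.cong refl) (simp add: Fs_nth[of "spow (Qser N p) _", symmetric])
  finally show ?thesis .
qed

lemma m1pow_nth: "((-1) ^ n * X :: real fls) $$ i = (-1) ^ n * X $$ i"
  by (simp flip: fls_const_m1pow)

lemma Dk_logser_trunc: assumes "i \<le> int M"
  shows "Dk (Fs (logser N p) s t) $$ i
     = (\<Sum>m\<in>{1..M}. (-1) ^ (m + 1) * Fs (Qser N p) s t ^ (m - 1) * Dk (Fs (Qser N p) s t)) $$ i"
proof -
  let ?q = "Fs (Qser N p) s t"
  have "Dk (Fs (logser N p) s t) $$ i = (\<Sum>m = 1..nat (i - 1). ((-1) ^ (m + 1) / real m) * (of_int (1 - i) * (?q ^ m) $$ (i - 1)))"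
    by (simp only: Dk_nth Fs_logser_nth sum_distrib_left) (rule sum.cong[OF refl], simp add: algebra_simps diff_divide_distrib)
  also have "\<dots> = (\<Sum>m\<in>{1..M}. ((-1) ^ (m + 1) / real m) * (of_int (1 - i) * (?q ^ m) $$ (i - 1)))"
  proof (rule sum.mono_neutral_left)
    show "{1..nat (i - 1)} \<subseteq> {1..M}" using assms by auto
    show "\<forall>m\<in>{1..M} - {1..nat (i - 1)}. (- 1) ^ (m + 1) / real m * (of_int (1 - i) * (?q ^ m) $$ (i - 1)) = 0"
    proof
      fix m assume m: "m \<in> {1..M} - {1..nat (i - 1)}"
      have "zb (int m * 1) (?q ^ m)" by (rule zb_power[OF zb_Q])
      then have "(?q ^ m) $$ (i - 1) = 0" using m by (intro zbD) auto
      then show "(- 1) ^ (m + 1) / real m * (of_int (1 - i) * (?q ^ m) $$ (i - 1)) = 0" by simp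
    qed
  qed simp
  also have "\<dots> = (\<Sum>m\<in>{1..M}. ((-1) ^ (m + 1) * ?q ^ (m - 1) * Dk ?q) $$ i)"
  proof (rule sum.cong[OF refl])
    fix m assume m: "m \<in> {1..M}"
    have "((-1) ^ (m + 1) * ?q ^ (m - 1) * Dk ?q) $$ i = (-1) ^ (m + 1) * (?q ^ (m - 1) * Dk ?q) $$ i"
      by (simp only: mult.assoc m1pow_nth)
    also have "?q ^ (m - 1) * Dk ?q = fls_const (1 / real m) * Dk (?q ^ m)"
    proof -
      have "fls_const (1 / real m) * Dk (?q ^ m) = (fls_const (1 / real m) * fls_const (real m)) * (?q ^ (m - 1) * Dk ?q)"
        by (simp add: Dk_power fls_of_nat mult.assoc)
      also have "fls_const (1 / real m) * fls_const (real m) = 1" using m by simp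
      finally show ?thesis by simp
    qed
    also have "(-1) ^ (m + 1) * (fls_const (1 / real m) * Dk (?q ^ m)) $$ i
        = ((-1) ^ (m + 1) / real m) * (of_int (1 - i) * (?q ^ m) $$ (i - 1))"
      by simp
    finally show "((-1) ^ (m + 1) / real m) * (of_int (1 - i) * (?q ^ m) $$ (i - 1))
        = ((-1) ^ (m + 1) * ?q ^ (m - 1) * Dk ?q) $$ i" by simp
  qed
  also have "\<dots> = (\<Sum>m\<in>{1..M}. (-1) ^ (m + 1) * ?q ^ (m - 1) * Dk ?q) $$ i"
    by (simp add: fls_nth_sum)
  finally show ?thesis .
qed


lemma Fs_dlogP_k: "Fs (dlogP_k N p) s t = fls_const (real N) * fls_X + Dk (Fs (logser N p) s t)"
proof (rule fls_eqI)
  fix i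
  show "Fs (dlogP_k N p) s t $$ i = (fls_const (real N) * fls_X + Dk (Fs (logser N p) s t)) $$ i"
    by (simp only: Fs_nth[OF ubd_dlogP_k] fls_plus_nth Dk_nth Fs_nth[OF ubd_logser])
       (simp add: dlogP_k_def dk_def algebra_simps)
qed

lemma Dk_cmult[simp]: "Dk (fls_const c * F) = fls_const c * Dk F" by simp

lemma Dk_shiftN: "Dk (fls_shift (int N) g) = fls_const (real N) * fls_X * fls_shift (int N) g + fls_shift (int N) (Dk g)"
proof -
  have e: "fls_const (real N) * fls_X * fls_shift (int N) g = fls_const (real N) * fls_shift (-1) (fls_shift (int N) g)"
    by (simp only: mult.assoc fls_X_times_conv_shift(1))
  show ?thesis by (simp only: e, rule fls_eqI) (simp add: algebra_simps)
qed

lemma K1: assumes "\<forall>s t. p 0 s t \<noteq> 0"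
  shows "smul (polyser N p) (dlogP_k N p) = dk (polyser N p)"
proof (rule ser_eqI)
  fix s t
  let ?q = "Fs (Qser N p) s t"
  let ?C = "fls_const (p 0 s t)"
  let ?P = "?C * fls_shift (int N) (1 + ?q)"
  have core: "?P * Dk (Fs (logser N p) s t) = ?C * fls_shift (int N) (Dk ?q)"
  proof (rule K_core[OF zb_Q])
    show "zb 1 (Dk ?q)" using zb_mono[OF zb_Dk[OF zb_Q]] by simp
    fix M :: nat and i :: int assume "i \<le> int M"
    then show "Dk (Fs (logser N p) s t) $$ i = (\<Sum>m = 1..M. (- 1) ^ (m + 1) * ?q ^ (m - 1) * Dk ?q) $$ i"
      by (rule Dk_logser_trunc)
  qed
  have "Fs (smul (polyser N p) (dlogP_k N p)) s t = ?P * (fls_const (real N) * fls_X + Dk (Fs (logser N p) s t))"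
    using assms by (simp add: Fs_polyser Fs_dlogP_k)
  also have "\<dots> = ?P * (fls_const (real N) * fls_X) + ?C * fls_shift (int N) (Dk ?q)"
    by (simp only: distrib_left core)
  also have "\<dots> = Fs (dk (polyser N p)) s t"
    using assms by (simp add: Fs_polyser Dk_shiftN algebra_simps)
  finally show "Fs (smul (polyser N p) (dlogP_k N p)) s t = Fs (dk (polyser N p)) s t" .
qed auto


lemma Fs_sdQ_nth: "Fs (sd v (Qser N p)) s t $$ i
   = (if 1 \<le> i \<and> i \<le> int N then pd v (\<lambda>s t. p (nat i) s t / p 0 s t) s t else 0)"
  by (simp only: Fs_nth[OF ubd_sd[OF ubd_Qser]]) (simp add: sd_def Qser_fun)

lemma zb_sdQ: "zb 1 (Fs (sd v (Qser N p)) s t)"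
  by (simp add: zb_def Fs_sdQ_nth)

lemma Fs_sd_logser_nth: assumes "\<forall>s t. p 0 s t \<noteq> 0" "\<forall>i\<le>N. pdf v (p i)"
  shows "Fs (sd v (logser N p)) s t $$ i = (\<Sum>m = 1..nat i. ((-1) ^ (m + 1) / real m) *
     (of_nat m * Fs (Qser N p) s t ^ (m - 1) * Fs (sd v (Qser N p)) s t) $$ i)"
proof -
  have d: "\<And>m j. pdf v (spow (Qser N p) m j)" using dser_spow[OF ubd_Qser dser_Qser[OF assms]] by (simp add: dser_def)
  have "Fs (sd v (logser N p)) s t $$ i = pd v (\<lambda>s t. \<Sum>m = 1..nat i. ((-1) ^ (m + 1) / real m) * spow (Qser N p) m (- i) s t) s t"
    by (simp only: Fs_nth[OF ubd_sd[OF ubd_logser]]) (simp add: sd_def logser_fun)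
  also have "\<dots> = (\<Sum>m = 1..nat i. ((-1) ^ (m + 1) / real m) * pd v (spow (Qser N p) m (- i)) s t)"
  proof -
    have e: "pd v (\<lambda>s t. \<Sum>m = 1..nat i. ((-1) ^ (m + 1) / real m) * spow (Qser N p) m (- i) s t)
        = (\<lambda>s t. \<Sum>m = 1..nat i. pd v (\<lambda>s t. ((-1) ^ (m + 1) / real m) * spow (Qser N p) m (- i) s t) s t)"
      by (rule pd_sum) (simp, rule pdf_cmult, rule d)
    show ?thesis by (simp only: e pd_cmult[OF d])
  qed
  also have "\<dots> = (\<Sum>m = 1..nat i. ((-1) ^ (m + 1) / real m) *
     (of_nat m * Fs (Qser N p) s t ^ (m - 1) * Fs (sd v (Qser N p)) s t) $$ i)"
  proof (rule sum.cong[OF refl])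
    fix m
    have "pd v (spow (Qser N p) m (- i)) s t = Fs (sd v (spow (Qser N p) m)) s t $$ i"
      by (simp only: Fs_nth[OF ubd_sd[OF ubd_spow[OF ubd_Qser]]]) (simp add: sd_def)
    also have "\<dots> = (of_nat m * Fs (Qser N p) s t ^ (m - 1) * Fs (sd v (Qser N p)) s t) $$ i"
      by (simp only: sd_spow[OF ubd_Qser dser_Qser[OF assms]])
    finally show "((-1) ^ (m + 1) / real m) * pd v (spow (Qser N p) m (- i)) s t = ((-1) ^ (m + 1) / real m) *
     (of_nat m * Fs (Qser N p) s t ^ (m - 1) * Fs (sd v (Qser N p)) s t) $$ i" by simp
  qed
  finally show ?thesis .
qed

lemma sd_logser_trunc: assumes "\<forall>s t. p 0 s t \<noteq> 0" "\<forall>i\<le>N. pdf v (p i)" "i \<le> int M"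
  shows "Fs (sd v (logser N p)) s t $$ i
     = (\<Sum>m\<in>{1..M}. (-1) ^ (m + 1) * Fs (Qser N p) s t ^ (m - 1) * Fs (sd v (Qser N p)) s t) $$ i"
proof -
  let ?q = "Fs (Qser N p) s t"
  let ?w = "Fs (sd v (Qser N p)) s t"
  have "Fs (sd v (logser N p)) s t $$ i = (\<Sum>m = 1..nat i. (-1) ^ (m + 1) * (?q ^ (m - 1) * ?w) $$ i)"
    unfolding Fs_sd_logser_nth[OF assms(1,2)]
  proof (rule sum.cong[OF refl])
    fix m assume m: "m \<in> {1..nat i}"
    have "(of_nat m * ?q ^ (m - 1) * ?w) $$ i = real m * (?q ^ (m - 1) * ?w) $$ i"
      by (simp add: fls_of_nat mult.assoc)
    then show "(-1) ^ (m + 1) / real m * (of_nat m * ?q ^ (m - 1) * ?w) $$ i = (-1) ^ (m + 1) * (?q ^ (m - 1) * ?w) $$ i"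
      using m by simp
  qed
  also have "\<dots> = (\<Sum>m\<in>{1..M}. (-1) ^ (m + 1) * (?q ^ (m - 1) * ?w) $$ i)"
  proof (rule sum.mono_neutral_left)
    show "{1..nat i} \<subseteq> {1..M}" using assms(3) by auto
    show "\<forall>m\<in>{1..M} - {1..nat i}. (-1) ^ (m + 1) * (?q ^ (m - 1) * ?w) $$ i = 0"
    proof
      fix m assume m: "m \<in> {1..M} - {1..nat i}"
      have "zb (int (m - 1) * 1 + 1) (?q ^ (m - 1) * ?w)" by (rule zb_mult[OF zb_power[OF zb_Q] zb_sdQ])
      then have "(?q ^ (m - 1) * ?w) $$ i = 0" using m by (intro zbD) auto
      then show "(-1) ^ (m + 1) * (?q ^ (m - 1) * ?w) $$ i = 0" by simp
    qed
  qed simp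
  also have "\<dots> = (\<Sum>m\<in>{1..M}. (-1) ^ (m + 1) * ?q ^ (m - 1) * ?w) $$ i"
    by (simp add: fls_nth_sum mult.assoc m1pow_nth)
  finally show ?thesis .
qed

lemma Fs_dlogP_v: assumes "\<forall>s t. p 0 s t \<noteq> 0" "pdf v (p 0)"
  shows "Fs (dlogP_v v N p) s t = fls_const (pd v (p 0) s t / p 0 s t) + Fs (sd v (logser N p)) s t"
proof (rule fls_eqI)
  fix i
  have l: "pd v (\<lambda>s t. ln \<bar>p 0 s t\<bar>) = (\<lambda>s t. pd v (p 0) s t / p 0 s t)"
    using pd_ln_abs[OF assms(2)] assms(1) by simp
  show "Fs (dlogP_v v N p) s t $$ i = (fls_const (pd v (p 0) s t / p 0 s t) + Fs (sd v (logser N p)) s t) $$ i"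
    by (simp only: Fs_nth[OF ubd_dlogP_v] fls_plus_nth Fs_nth[OF ubd_sd[OF ubd_logser]])
       (simp add: dlogP_v_def l)
qed

lemma Fs_sd_polyser: assumes "\<forall>s t. p 0 s t \<noteq> 0" "\<forall>i\<le>N. pdf v (p i)"
  shows "Fs (sd v (polyser N p)) s t = fls_const (pd v (p 0) s t) * fls_shift (int N) (1 + Fs (Qser N p) s t)
      + fls_const (p 0 s t) * fls_shift (int N) (Fs (sd v (Qser N p)) s t)"
proof (rule fls_eqI)
  fix i
  have lhs: "Fs (sd v (polyser N p)) s t $$ i = (if - int N \<le> i \<and> i \<le> 0 then pd v (p (N - nat (- i))) s t else 0)"
    by (simp only: Fs_nth[OF ubd_sd[OF ubd_polyser]]) (auto simp: sd_def polyser_fun)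
  show "Fs (sd v (polyser N p)) s t $$ i = (fls_const (pd v (p 0) s t) * fls_shift (int N) (1 + Fs (Qser N p) s t)
      + fls_const (p 0 s t) * fls_shift (int N) (Fs (sd v (Qser N p)) s t)) $$ i"
  proof (cases "i = - int N")
    case True then show ?thesis using lhs by (simp add: Fs_Qser_nth Fs_sdQ_nth)
  next
    case False
    show ?thesis
    proof (cases "- int N < i \<and> i \<le> 0")
      case True
      define l where "l = nat (i + int N)"
      have l: "N - nat (- i) = l" "1 \<le> l" "l \<le> N" "i + int N = int l" using True by (auto simp: l_def)
      have pl: "pdf v (p l)" "pdf v (p 0)" using assms(2) l by auto
      have "pd v (\<lambda>s t. p l s t / p 0 s t) s t = (pd v (p l) s t * p 0 s t - p l s t * pd v (p 0) s t) / p 0 s t ^ 2"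
        using pd_divide[OF pl] assms(1) by simp
      then show ?thesis using True False l assms(1) by (simp add: lhs Fs_Qser_nth Fs_sdQ_nth field_simps power2_eq_square)
    next
      case False2: False
      then show ?thesis using False by (auto simp: lhs Fs_Qser_nth Fs_sdQ_nth)
    qed
  qed
qed

lemma K2: assumes "\<forall>s t. p 0 s t \<noteq> 0" "\<forall>i\<le>N. pdf v (p i)"
  shows "smul (polyser N p) (dlogP_v v N p) = sd v (polyser N p)"
proof (rule ser_eqI)
  fix s t
  let ?q = "Fs (Qser N p) s t"
  let ?w = "Fs (sd v (Qser N p)) s t"
  let ?C = "fls_const (p 0 s t)"
  let ?P = "?C * fls_shift (int N) (1 + ?q)"
  have p0: "pdf v (p 0)" using assms(2) by auto
  have core: "?P * Fs (sd v (logser N p)) s t = ?C * fls_shift (int N) ?w"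
  proof (rule K_core[OF zb_Q zb_sdQ])
    fix M :: nat and i :: int assume "i \<le> int M"
    then show "Fs (sd v (logser N p)) s t $$ i = (\<Sum>m = 1..M. (- 1) ^ (m + 1) * ?q ^ (m - 1) * ?w) $$ i"
      by (rule sd_logser_trunc[OF assms])
  qed
  have c: "?C * fls_const (pd v (p 0) s t / p 0 s t) = fls_const (pd v (p 0) s t)"
    using assms(1) by simp
  have "Fs (smul (polyser N p) (dlogP_v v N p)) s t = ?P * (fls_const (pd v (p 0) s t / p 0 s t) + Fs (sd v (logser N p)) s t)"
    using assms(1) by (simp add: Fs_polyser Fs_dlogP_v[where p=p and v=v, OF assms(1) p0])
  also have "\<dots> = ?C * fls_const (pd v (p 0) s t / p 0 s t) * fls_shift (int N) (1 + ?q) + ?C * fls_shift (int N) ?w"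
    by (simp only: distrib_left core) (simp add: ac_simps)
  also have "\<dots> = Fs (sd v (polyser N p)) s t"
    by (simp only: c Fs_sd_polyser[OF assms])
  finally show "Fs (smul (polyser N p) (dlogP_v v N p)) s t = Fs (sd v (polyser N p)) s t" .
qed auto




lemma dk_sadd[simp]: "dk (sadd f g) = sadd (dk f) (dk g)" by (auto simp: dk_def sadd_def algebra_simps)
lemma dk_ssub[simp]: "dk (ssub f g) = ssub (dk f) (dk g)" by (auto simp: dk_def ssub_def algebra_simps)
lemma dk_cst[simp]: "dk (cst c) = (\<lambda>j s t. 0)" by (intro ext) (auto simp: dk_def cst_def)
lemma smul_zero[simp]: "smul f (\<lambda>j s t. 0) = (\<lambda>j s t. 0)" "smul (\<lambda>j s t. 0) f = (\<lambda>j s t. 0)"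
  by (auto simp: smul_def)

lemma ub_pos: "ub M f \<Longrightarrow> ub M (pos f)" by (auto simp: ub_def pos_def)
lemma ubd_pos[simp,intro]: "ubd f \<Longrightarrow> ubd (pos f)" using ub_pos ubI unfolding ubd_def by blast
lemma dser_pos[simp,intro]: "dser v f \<Longrightarrow> dser v (pos f)" by (auto simp: dser_def pos_def)

lemma gc_nat_zero: "0 \<le> m \<Longrightarrow> m < r \<Longrightarrow> gc m r = 0"
proof -
  assume A: "0 \<le> m" "m < r"
  have "(of_int m :: real) gchoose nat r = of_nat (nat m) gchoose nat r" using A by simp
  also have "\<dots> = of_nat (nat m choose nat r)" by (simp add: binomial_gbinomial)
  also have "\<dots> = 0" using A by simp
  finally show ?thesis using A by (simp add: gc_def)
qed

lemma shift_poly_neg: assumes "ub M f" "\<And>m s t. m < 0 \<Longrightarrow> f m s t = 0" "j < 0"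
  shows "sshift a f j s t = 0"
  unfolding sshift_sh[OF assms(1)] sh_def
proof (rule sum.neutral, intro ballI)
  fix m assume m: "m \<in> {j..M}"
  show "f m s t * gc m (m - j) * (- a s t) ^ nat (m - j) = 0"
  proof (cases "m < 0")
    case True then show ?thesis using assms(2) by simp
  next
    case False then show ?thesis using gc_nat_zero[of m "m - j"] assms(3) by simp
  qed
qed

lemma gch_self: "0 \<le> m \<Longrightarrow> (of_int m :: real) gchoose nat m = 1"
proof -
  assume A: "0 \<le> m"
  have "(of_int m :: real) = of_nat (nat m)" using A by simp
  then have "(of_int m :: real) gchoose nat m = of_nat (nat m) gchoose nat m"
    by (rule arg_cong[where f = "\<lambda>x. x gchoose nat m"])
  also have "\<dots> = of_nat (nat m choose nat m)" by (simp only: binomial_gbinomial)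
  also have "\<dots> = 1" by simp
  finally show ?thesis .
qed

lemma pos_shift: assumes "ubd f"
  shows "pos (sshift a f) = ssub (sshift a (pos f)) (cst (\<lambda>s t. sshift a (pos f) 0 s t))"
proof (intro ext)
  fix j s t
  obtain M where M: "ub M f" using assms by (auto simp: ubd_def)
  show "pos (sshift a f) j s t = ssub (sshift a (pos f)) (cst (\<lambda>s t. sshift a (pos f) 0 s t)) j s t"
  proof (cases "0 < j")
    case True
    have "sshift a (pos f) j s t = sh (- a s t) M (\<lambda>m. pos f m s t) j" by (rule sshift_sh[OF ub_pos[OF M]])
    also have "\<dots> = sh (- a s t) M (\<lambda>m. f m s t) j"
      unfolding sh_def by (rule sum.cong) (use True in \<open>auto simp: pos_def\<close>)
    also have "\<dots> = sshift a f j s t" by (rule sshift_sh[OF M, symmetric])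
    finally show ?thesis using True by (simp add: pos_def ssub_def cst_def)
  next
    case False
    then show ?thesis
    proof (cases "j = 0")
      case True then show ?thesis by (simp add: pos_def ssub_def cst_def)
    next
      case False2: False
      have "sshift a (pos f) j s t = 0"
        by (rule shift_poly_neg[OF ub_pos[OF M]]) (use False False2 in \<open>auto simp: pos_def\<close>)
      then show ?thesis using False False2 by (simp add: pos_def ssub_def cst_def)
    qed
  qed
qed

lemma shift_pos0_evalpos: assumes "ubd f"
  shows "sshift a (pos f) 0 s t = evalpos (pos f) (\<lambda>s t. - a s t) s t"
proof -
  obtain M where M: "ub M f" using assms by (auto simp: ubd_def)
  have "sshift a (pos f) 0 s t = (\<Sum>m\<in>{m. 0 \<le> m \<and> pos f m s t \<noteq> 0}. pos f m s t * (- a s t) ^ nat m)"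
    unfolding sshift_def by (rule sum.cong) (auto simp: gch_self)
  also have "\<dots> = evalpos (pos f) (\<lambda>s t. - a s t) s t"
    unfolding evalpos_def by (rule sum.cong) (auto simp: pos_def split: if_splits)
  finally show ?thesis .
qed

lemma Fs_nonzero: "ubd f \<Longrightarrow> f j s t \<noteq> 0 \<Longrightarrow> Fs f s t \<noteq> 0"
proof
  assume A: "ubd f" "f j s t \<noteq> 0" "Fs f s t = 0"
  have "Fs f s t $$ (- j) = f j s t" using A(1) by (simp add: Fs_nth)
  then show False using A(2,3) by simp
qed

lemma ser_cancel: assumes "ubd P" "ubd X" "ubd Y" "\<And>s t. Fs P s t \<noteq> 0" "smul P X = smul P Y"
  shows "X = Y"
proof (rule ser_eqI[OF assms(2,3)])
  fix s t
  have "Fs P s t * Fs X s t = Fs P s t * Fs Y s t"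
    using arg_cong[OF assms(5), of "\<lambda>f. Fs f s t"] assms(1-3) by simp
  then show "Fs X s t = Fs Y s t" using assms(4) by simp
qed


section \<open>The transformed polynomial\<close>

definition ptd :: "nat \<Rightarrow> (nat \<Rightarrow> fn) \<Rightarrow> fn \<Rightarrow> fn \<Rightarrow> nat \<Rightarrow> fn" where
  "ptd N p a g = (\<lambda>i s t. exp (g s t) * sshift a (polyser N p) (int N - int i) s t)"

lemma polyser_neg: "m < 0 \<Longrightarrow> polyser N p m s t = 0" by (simp add: polyser_def)

lemma P1: "polyser N (ptd N p a g) = smul (cst (\<lambda>s t. exp (g s t))) (sshift a (polyser N p))"
proof (intro ext)
  fix j s t
  show "polyser N (ptd N p a g) j s t = smul (cst (\<lambda>s t. exp (g s t))) (sshift a (polyser N p)) j s t"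
  proof (cases "0 \<le> j \<and> j \<le> int N")
    case True
    then have e: "int N - int (N - nat j) = j" by auto
    have "polyser N (ptd N p a g) j s t = ptd N p a g (N - nat j) s t" using True by (simp add: polyser_def)
    then show ?thesis using e True by (simp add: smul_cst ptd_def)
  next
    case False
    have "sshift a (polyser N p) j s t = 0"
    proof (cases "j < 0")
      case True then show ?thesis by (intro shift_poly_neg[OF ub_polyser] polyser_neg)
    next
      case False2: False
      then have "int N < j" using False by auto
      then show ?thesis using ub_shift[OF ub_polyser] by (auto simp: ub_def)
    qed
    moreover have "polyser N (ptd N p a g) j s t = 0" using False by (auto simp: polyser_def)
    ultimately show ?thesis by (simp add: smul_cst)
  qed
qed

lemma shiftP_N: "sshift a (polyser N p) (int N) s t = p 0 s t"
  by (simp only: sshift_sh[OF ub_polyser]) (simp add: sh_def gc_def polyser_def)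

lemma P2: "p 0 s t \<noteq> 0 \<Longrightarrow> ptd N p a g 0 s t \<noteq> 0"
  by (simp add: ptd_def shiftP_N)

lemma P3: assumes "\<forall>i\<le>N. pdf v (p i)" "pdf v a" "pdf v g"
  shows "pdf v (ptd N p a g i)"
proof -
  have "dser v (sshift a (polyser N p))" using assms by (intro dser_shift) auto
  then have "pdf v (sshift a (polyser N p) (int N - int i))" by (simp add: dser_def)
  then show ?thesis unfolding ptd_def using assms(3) by (intro pdf_mult pdf_exp)
qed

lemma P4: assumes "\<forall>s t. p 0 s t \<noteq> 0" shows "Fs (polyser N (ptd N p a g)) s t \<noteq> 0"
proof (rule Fs_nonzero[OF ubd_polyser, where j = "int N"])
  have "polyser N (ptd N p a g) (int N) s t = ptd N p a g 0 s t" by (simp add: polyser_def)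
  then show "polyser N (ptd N p a g) (int N) s t \<noteq> 0" using P2 assms by simp
qed

lemma P5: assumes "\<forall>s t. p 0 s t \<noteq> 0"
  shows "dlogP_k N (ptd N p a g) = sshift a (dlogP_k N p)"
proof (rule ser_cancel[OF ubd_polyser ubd_dlogP_k ubd_shift[OF ubd_dlogP_k] P4[where p=p and N=N and a=a and g=g, OF assms]])
  have pt0: "\<forall>s t. ptd N p a g 0 s t \<noteq> 0" using assms P2 by blast
  have "smul (polyser N (ptd N p a g)) (sshift a (dlogP_k N p)) = dk (polyser N (ptd N p a g))"
  proof (rule ser_eqI)
    fix s t
    have e: "Fs (sshift a (polyser N p)) s t * Fs (sshift a (dlogP_k N p)) s t = Dk (Fs (sshift a (polyser N p)) s t)"
    proof -
      have "Fs (sshift a (polyser N p)) s t * Fs (sshift a (dlogP_k N p)) s t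
          = Fs (sshift a (smul (polyser N p) (dlogP_k N p))) s t"
        by (simp add: shift_smul)
      also have "\<dots> = Fs (sshift a (dk (polyser N p))) s t" by (simp only: K1[where p=p and N=N, OF assms])
      also have "\<dots> = Dk (Fs (sshift a (polyser N p)) s t)" by (simp add: dk_shift[symmetric])
      finally show ?thesis .
    qed
    show "Fs (smul (polyser N (ptd N p a g)) (sshift a (dlogP_k N p))) s t = Fs (dk (polyser N (ptd N p a g))) s t"
      by (simp add: P1 mult.assoc e)
  qed auto
  then show "smul (polyser N (ptd N p a g)) (dlogP_k N (ptd N p a g)) = smul (polyser N (ptd N p a g)) (sshift a (dlogP_k N p))"
    using K1[where p="ptd N p a g" and N=N, OF pt0] by simp
qed

lemma P6: assumes "\<forall>s t. p 0 s t \<noteq> 0" "\<forall>i\<le>N. pdf v (p i)" "pdf v a" "pdf v g"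
  shows "dlogP_v v N (ptd N p a g) = sadd (cst (pd v g)) (ssub (sshift a (dlogP_v v N p)) (smul (cst (pd v a)) (sshift a (dlogP_k N p))))"
proof (rule ser_cancel[OF ubd_polyser ubd_dlogP_v _ P4[where p=p and N=N and a=a and g=g, OF assms(1)]])
  show "ubd (sadd (cst (pd v g)) (ssub (sshift a (dlogP_v v N p)) (smul (cst (pd v a)) (sshift a (dlogP_k N p)))))"
    by simp
  have pt0: "\<forall>s t. ptd N p a g 0 s t \<noteq> 0" using assms P2 by blast
  have ptd: "\<forall>i\<le>N. pdf v (ptd N p a g i)" using P3 assms by blast
  have dP: "dser v (polyser N p)" using assms(2) by simp
  have dSP: "dser v (sshift a (polyser N p))" using dP assms(3) by simp
  have pe: "pdf v (\<lambda>s t. exp (g s t))" using assms(4) by auto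
  have "sd v (polyser N (ptd N p a g))
      = sadd (smul (cst (pd v (\<lambda>s t. exp (g s t)))) (sshift a (polyser N p)))
             (smul (cst (\<lambda>s t. exp (g s t))) (ssub (sshift a (sd v (polyser N p))) (smul (cst (pd v a)) (sshift a (dk (polyser N p))))))"
    by (simp add: P1 sd_smul dSP pe sd_shift[OF ubd_polyser dP assms(3)])
  also have "\<dots> = smul (polyser N (ptd N p a g)) (sadd (cst (pd v g)) (ssub (sshift a (dlogP_v v N p)) (smul (cst (pd v a)) (sshift a (dlogP_k N p)))))"
  proof (rule ser_eqI)
    fix s t
    have e1: "Fs (sshift a (sd v (polyser N p))) s t = Fs (sshift a (polyser N p)) s t * Fs (sshift a (dlogP_v v N p)) s t"
      by (simp add: K2[where p=p and N=N, OF assms(1,2), symmetric] shift_smul)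
    have e2: "Fs (sshift a (dk (polyser N p))) s t = Fs (sshift a (polyser N p)) s t * Fs (sshift a (dlogP_k N p)) s t"
      by (simp add: K1[where p=p and N=N, OF assms(1), symmetric] shift_smul)
    show "Fs (sadd (smul (cst (pd v (\<lambda>s t. exp (g s t)))) (sshift a (polyser N p)))
             (smul (cst (\<lambda>s t. exp (g s t))) (ssub (sshift a (sd v (polyser N p))) (smul (cst (pd v a)) (sshift a (dk (polyser N p))))))) s t
        = Fs (smul (polyser N (ptd N p a g)) (sadd (cst (pd v g)) (ssub (sshift a (dlogP_v v N p)) (smul (cst (pd v a)) (sshift a (dlogP_k N p)))))) s t"
      using e1 e2 by (simp add: P1 pd_exp[OF assms(4)] algebra_simps)
  qed auto
  finally show "smul (polyser N (ptd N p a g)) (dlogP_v v N (ptd N p a g)) = smul (polyser N (ptd N p a g)) (sadd (cst (pd v g)) (ssub (sshift a (dlogP_v v N p)) (smul (cst (pd v a)) (sshift a (dlogP_k N p)))))"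
    using K2[where p="ptd N p a g" and N=N, OF pt0 ptd] by simp
qed




lemma main_dcmKP:
  fixes N :: nat and p :: "nat \<Rightarrow> fn" and \<phi> :: fn and L :: ser
  assumes uL: "ubd L" and dL: "\<And>v. dser v L"
    and p0: "\<forall>s t. p 0 s t \<noteq> 0" and pp: "\<And>v. \<forall>i\<le>N. pdf v (p i)"
    and ph1: "\<And>v w. pdf v (pd w \<phi>)" and ph2: "\<And>v w. pd v (pd w \<phi>) = pd w (pd v \<phi>)"
    and dc: "dcmKP N L p"
    and hyp: "\<forall>n\<ge>1. \<forall>s t. pd (T n) \<phi> s t = - evalpos (Bn L n) (\<lambda>s t. - pd (T 0) \<phi> s t) s t"
  shows "dcmKP N (sshift (pd (T 0) \<phi>) L) (ptd N p (pd (T 0) \<phi>) (pd S \<phi>))"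
proof -
  define a where "a = pd (T 0) \<phi>"
  define g where "g = pd S \<phi>"
  define pt where "pt = ptd N p a g"
  have pa: "\<And>v. pdf v a" and pg: "\<And>v. pdf v g" using ph1 by (auto simp: a_def g_def)
  have hT: "\<And>n. n \<ge> 1 \<Longrightarrow> sd (T n) L = pbr (Bn L n) L" using dc by (simp add: dcmKP_def)
  have hS: "sd S L = brlog N p L" using dc by (simp add: dcmKP_def)
  have hP: "\<And>n. n \<ge> 1 \<Longrightarrow> dlogP_v (T n) N p = ssub (sd S (Bn L n)) (brlog N p (Bn L n))"
    using dc by (simp add: dcmKP_def)
  have uB: "\<And>n. ubd (Bn L n)" using uL by (simp add: Bn_def)
  have dB: "\<And>n v. dser v (Bn L n)" using uL dL by (simp add: Bn_def)
  have BLt: "\<And>n. n \<ge> 1 \<Longrightarrow> Bn (sshift a L) n = ssub (sshift a (Bn L n)) (cst (\<lambda>s t. - pd (T n) \<phi> s t))"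
  proof -
    fix n :: nat assume n: "n \<ge> 1"
    have "Bn (sshift a L) n = ssub (sshift a (Bn L n)) (cst (\<lambda>s t. sshift a (Bn L n) 0 s t))"
      unfolding Bn_def using uL by (simp add: shift_spow[symmetric] pos_shift)
    also have "(\<lambda>s t. sshift a (Bn L n) 0 s t) = (\<lambda>s t. - pd (T n) \<phi> s t)"
      using hyp n uL by (simp add: Bn_def shift_pos0_evalpos a_def)
    finally show "Bn (sshift a L) n = ssub (sshift a (Bn L n)) (cst (\<lambda>s t. - pd (T n) \<phi> s t))" .
  qed
  have cx: "\<And>n. pd (T 0) (\<lambda>s t. - pd (T n) \<phi> s t) = (\<lambda>s t. - pd (T n) a s t)"
    using ph1 ph2 by (simp add: pd_minus a_def)
  have E1: "sd (T n) (sshift a L) = pbr (Bn (sshift a L) n) (sshift a L)" if n: "n \<ge> 1" for n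
  proof (rule ser_eqI)
    fix s t
    show "Fs (sd (T n) (sshift a L)) s t = Fs (pbr (Bn (sshift a L) n) (sshift a L)) s t"
      using uL dL pa uB dB ph1
      by (simp add: BLt[OF n] sd_shift hT[OF n] pbr_def shift_ssub shift_smul dk_shift cx
          algebra_simps)
  qed (simp_all add: BLt[OF n] uL uB pbr_def)
  have sx: "pd S a = pd (T 0) g" using ph2 by (simp add: a_def g_def)
  have cs: "\<And>n. pd S (\<lambda>s t. - pd (T n) \<phi> s t) = (\<lambda>s t. - pd (T n) g s t)"
    using ph1 ph2 by (simp add: pd_minus g_def)
  have P5': "dlogP_k N (ptd N p a g) = sshift a (dlogP_k N p)" by (rule P5[where p=p and N=N, OF p0])
  have P6': "\<And>v. dlogP_v v N (ptd N p a g) = sadd (cst (pd v g)) (ssub (sshift a (dlogP_v v N p)) (smul (cst (pd v a)) (sshift a (dlogP_k N p))))"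
    by (rule P6[where p=p and N=N, OF p0 pp pa pg])
  have E2: "sd S (sshift a L) = brlog N (ptd N p a g) (sshift a L)"
  proof (rule ser_eqI)
    fix s t
    show "Fs (sd S (sshift a L)) s t = Fs (brlog N (ptd N p a g) (sshift a L)) s t"
      using uL dL pa
      by (simp add: sd_shift hS brlog_def shift_ssub shift_smul dk_shift P5' P6' sx algebra_simps)
  qed (simp_all add: uL brlog_def P5' P6')
  have E3: "dlogP_v (T n) N (ptd N p a g) = ssub (sd S (Bn (sshift a L) n)) (brlog N (ptd N p a g) (Bn (sshift a L) n))"
    if n: "n \<ge> 1" for n
  proof (rule ser_eqI)
    fix s t
    show "Fs (dlogP_v (T n) N (ptd N p a g)) s t = Fs (ssub (sd S (Bn (sshift a L) n)) (brlog N (ptd N p a g) (Bn (sshift a L) n))) s t"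
      using uL dL pa uB dB ph1
      by (simp add: P6' hP[OF n] BLt[OF n] sd_shift brlog_def shift_ssub shift_smul dk_shift P5' sx cs cx
          algebra_simps)
  qed (simp_all add: uB BLt[OF n] brlog_def P5' P6')
  show ?thesis unfolding dcmKP_def a_def[symmetric] g_def[symmetric]
    using E1 E2 E3 by blast
qed


section \<open>The exponential of ad\<close>

lemma ad_eq: "ad F f = (\<lambda>j s t. - pd (T 0) F s t * dk f j s t)"
  by (intro ext) (simp add: ad_def pbr_def ssub_def smul_cst)

lemma dk_scal: "dk (\<lambda>j s t. c s t * h j s t) = (\<lambda>j s t. c s t * dk h j s t)"
  by (intro ext) (simp add: dk_def algebra_simps)

lemma ad_pow: "(ad F ^^ m) f = (\<lambda>j s t. (- pd (T 0) F s t) ^ m * (dk ^^ m) f j s t)"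
proof (induction m)
  case 0 then show ?case by simp
next
  case (Suc m)
  have "(ad F ^^ Suc m) f = ad F ((ad F ^^ m) f)" by simp
  also have "\<dots> = (\<lambda>j s t. (- pd (T 0) F s t) ^ Suc m * (dk ^^ Suc m) f j s t)"
    unfolding Suc ad_eq dk_scal by (intro ext) (simp add: algebra_simps)
  finally show ?case .
qed

lemma dk_pow: "(dk ^^ m) f j s t = pochhammer (of_int j + 1) m * f (j + int m) s t"
proof (induction m arbitrary: j)
  case 0 then show ?case by simp
next
  case (Suc m)
  have "(dk ^^ Suc m) f j s t = of_int (j + 1) * (dk ^^ m) f (j + 1) s t"
    by (simp add: dk_def funpow_Suc_right[symmetric] del: funpow.simps)
       (simp add: funpow_Suc_right dk_def)
  also have "\<dots> = pochhammer (of_int j + 1) (Suc m) * f (j + int (Suc m)) s t"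
    unfolding Suc by (simp add: pochhammer_rec algebra_simps)
  finally show ?case .
qed


lemma expad_shift: assumes M: "ub M f" shows "expad F f = sshift (pd (T 0) F) f"
proof (intro ext)
  fix j s t
  define b where "b = - pd (T 0) F s t"
  define K where "K = nat (M - j)"
  define h where "h = (\<lambda>m. b ^ m * (pochhammer (of_int j + 1) m / fact m) * f (j + int m) s t)"
  have hz: "h m = 0" if "m \<notin> {0..K}" for m
  proof -
    have "M < j + int m" using that by (auto simp: K_def)
    then show ?thesis using ubD[OF M] by (simp add: h_def)
  qed
  have "expad F f j s t = (\<Sum>m. h m)"
    unfolding expad_def ad_pow dk_pow h_def b_def by (simp add: algebra_simps)
  also have "\<dots> = (\<Sum>m\<in>{0..K}. h m)"
    by (rule suminf_finite) (use hz in auto)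
  also have "\<dots> = sshift (pd (T 0) F) f j s t"
  proof (cases "j \<le> M")
    case True
    have "sshift (pd (T 0) F) f j s t = (\<Sum>k\<in>{j..M}. f k s t * gc k (k - j) * b ^ nat (k - j))"
      by (simp add: sshift_sh[OF M] sh_def b_def)
    also have "\<dots> = (\<Sum>m\<in>{0..K}. h m)"
    proof (rule sum.reindex_bij_witness[of _ "\<lambda>m. j + int m" "\<lambda>k. nat (k - j)"])
      fix k assume k: "k \<in> {j..M}"
      have g: "gc k (k - j) = pochhammer (of_int j + 1) (nat (k - j)) / fact (nat (k - j))"
        using k by (simp add: gc_def gbinomial_pochhammer')
      show "h (nat (k - j)) = f k s t * gc k (k - j) * b ^ nat (k - j)"
        using k by (simp add: h_def g)
    qed (use True in \<open>auto simp: K_def\<close>)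
    finally show ?thesis by simp
  next
    case False
    have "sshift (pd (T 0) F) f j s t = 0" by (simp add: sshift_sh[OF M] sh_def) (use False in simp)
    moreover have "(\<Sum>m\<in>{0..K}. h m) = 0" using False ubD[OF M] by (simp add: K_def h_def)
    ultimately show ?thesis by simp
  qed
  finally show "expad F f j s t = sshift (pd (T 0) F) f j s t" .
qed


theorem mainTheorem14:
  fixes N :: nat and u :: "nat \<Rightarrow> fn" and p :: "nat \<Rightarrow> fn" and \<phi> :: fn
    and L Lt :: ser and pt :: "nat \<Rightarrow> fn"
  defines "L \<equiv> (\<lambda>j. if j = 1 then (\<lambda>s t. 1) else if j \<le> 0 then u (nat (1 - j)) else (\<lambda>s t. 0))"
  defines "Lt \<equiv> sshift (pd (T 0) \<phi>) L"
  defines "pt \<equiv> (\<lambda>i s t. exp (pd S \<phi> s t) * sshift (pd (T 0) \<phi>) (polyser N p) (int N - int i) s t)"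
  assumes "N \<ge> 1"
    and "\<forall>n\<ge>1. smooth (u n) \<and> xt_conv (u n)"
    and "\<forall>i\<le>N. smooth (p i) \<and> xt_conv (p i)"
    and "smooth \<phi>" and "xt_conv \<phi>"
    and "\<forall>s t. p 0 s t \<noteq> 0"
    and "dcmKP N L p"
    and "\<forall>n\<ge>1. \<forall>s t. pd (T n) \<phi> s t = - evalpos (Bn L n) (\<lambda>s t. - pd (T 0) \<phi> s t) s t"
  shows "Lt = expad \<phi> L \<and> dcmKP N Lt pt"
  proof -
  have ubL: "ub 1 L" by (simp add: ub_def L_def)
  have sm: "\<And>F v. smooth F \<Longrightarrow> pdf v F"
  proof -
    fix F v assume "smooth F"
    then have "pdf v (fold pd [] F)" unfolding smooth_def by blast
    then show "pdf v F" by simp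
  qed
  have sm1: "\<And>F v w. smooth F \<Longrightarrow> pdf v (pd w F)"
  proof -
    fix F v w assume "smooth F"
    then have "pdf v (fold pd [w] F)" unfolding smooth_def by blast
    then show "pdf v (pd w F)" by simp
  qed
  have sm2: "\<And>F v w. smooth F \<Longrightarrow> pd v (pd w F) = pd w (pd v F)"
  proof -
    fix F v w assume "smooth F"
    then have "pd v (pd w (fold pd [] F)) = pd w (pd v (fold pd [] F))" unfolding smooth_def by blast
    then show "pd v (pd w F) = pd w (pd v F)" by simp
  qed
  have dL: "\<And>v. dser v L"
    unfolding dser_def L_def using assms(5) sm by auto
  have pp: "\<And>v. \<forall>i\<le>N. pdf v (p i)" using assms(6) sm by auto
  have ph1: "\<And>v w. pdf v (pd w \<phi>)" using assms(7) sm1 by blast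
  have ph2: "\<And>v w. pd v (pd w \<phi>) = pd w (pd v \<phi>)" using assms(7) sm2 by blast
  have pt: "pt = ptd N p (pd (T 0) \<phi>) (pd S \<phi>)" by (simp add: pt_def ptd_def)
  have part1: "Lt = expad \<phi> L" unfolding Lt_def by (rule expad_shift[OF ubL, symmetric])
  have part2: "dcmKP N Lt pt" unfolding Lt_def pt
    by (rule main_dcmKP[OF ubI[OF ubL] dL assms(9) pp ph1 ph2 assms(10) assms(11)])
  show ?thesis using part1 part2 by blast
qed

end
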